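(* Let $G$ be an Oliver group and $N\trianglelefteq G$ a normal subgroup such that $\operatorname{Ind}_N^G:\operatorname{RO}(N)\to\operatorname{RO}(G)$ is a monomorphism. Let $V$ be an $\mathbb{R}N$-module satisfying, with respect to the group $N$, the following three conditions: (i) (weak gap condition) $\dim V^P\ge 2\dim V^H$ for every subgroup $P\le N$ of prime power order and every subgroup $H$ with $P<H\le N$; (ii) $\dim V^P\ge 5$ for every subgroup $P\le N$ of prime power order, and $\dim V^H\ge 2$ for every pseudocyclic subgroup $H\le N$; (iii) every pseudocyclic subgroup of $N$ occurs as an isotropy subgroup of the action of $N$ on $V$. Then $W=\operatorname{Ind}_N^G(V)$ satisfies conditions (i)–(iii) as an $\mathbb{R}G$-module, with $N$ replaced by $G$ throughout.
   Context: An Oliver group is a finite group $G$ for which there is no chain of subgroups $P\trianglelefteq H\trianglelefteq G$ with $P$ and $G/H$ of prime power order and $H/P$ cyclic. A finite group $K$ is pseudocyclic if for some prime $p$ it contains a normal $p$-subgroup $P$ with $K/P$ cyclic. $\operatorname{RO}(K)$ is the real representation group. $V^H$ is the subspace fixed by $H$; an isotropy subgroup of an action is a stabilizer $\{g : gv=v\}$ of some vector $v$. *)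

theory Defs
  imports "Jordan_Normal_Form.VS_Connect" "HOL-Algebra.Elementary_Groups"
    "HOL-Computational_Algebra.Primes"
begin

text \<open>All subgroups are subsets of the carrier of an ambient (HOL-Algebra) group G.\<close>

definition prime_power_order :: "'a set \<Rightarrow> bool" where
  "prime_power_order P \<longleftrightarrow> (\<exists>p k. prime (p::nat) \<and> card P = p ^ k)"

definition pseudocyclic :: "('a, 'b) monoid_scheme \<Rightarrow> 'a set \<Rightarrow> bool" where
  "pseudocyclic G K \<longleftrightarrow> subgroup K G \<and>
     (\<exists>p k P. prime (p::nat) \<and> P \<lhd> (G\<lparr>carrier := K\<rparr>) \<and> card P = p ^ k \<and>
        cyclic_group ((G\<lparr>carrier := K\<rparr>) Mod P))"

definition oliver_group :: "('a, 'b) monoid_scheme \<Rightarrow> bool" where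
  "oliver_group G \<longleftrightarrow> group G \<and> finite (carrier G) \<and>
     \<not> (\<exists>P H p q a b. prime (p::nat) \<and> prime (q::nat) \<and>
          H \<lhd> G \<and> P \<lhd> (G\<lparr>carrier := H\<rparr>) \<and>
          card P = p ^ a \<and> card (carrier (G Mod H)) = q ^ b \<and>
          cyclic_group ((G\<lparr>carrier := H\<rparr>) Mod P))"

definition is_rep :: "('a, 'b) monoid_scheme \<Rightarrow> 'a set \<Rightarrow> nat \<Rightarrow> ('a \<Rightarrow> real mat) \<Rightarrow> bool" where
  "is_rep G H d \<rho> \<longleftrightarrow> (\<forall>g\<in>H. \<rho> g \<in> carrier_mat d d) \<and>
      (\<forall>g\<in>H. \<forall>h\<in>H. \<rho> (g \<otimes>\<^bsub>G\<^esub> h) = \<rho> g * \<rho> h) \<and> \<rho> \<one>\<^bsub>G\<^esub> = 1\<^sub>m d"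

definition rep_iso :: "'a set \<Rightarrow> nat \<Rightarrow> ('a \<Rightarrow> real mat) \<Rightarrow> nat \<Rightarrow> ('a \<Rightarrow> real mat) \<Rightarrow> bool" where
  "rep_iso H d \<rho> d' \<sigma> \<longleftrightarrow> d = d' \<and>
     (\<exists>T \<in> carrier_mat d d. invertible_mat T \<and> (\<forall>g\<in>H. T * \<rho> g = \<sigma> g * T))"

definition rep_sum :: "nat \<Rightarrow> ('a \<Rightarrow> real mat) \<Rightarrow> nat \<Rightarrow> ('a \<Rightarrow> real mat) \<Rightarrow> ('a \<Rightarrow> real mat)" where
  "rep_sum d \<rho> d' \<sigma> = (\<lambda>g. four_block_mat (\<rho> g) (0\<^sub>m d d') (0\<^sub>m d' d) (\<sigma> g))"

definition fix_space :: "nat \<Rightarrow> ('a \<Rightarrow> real mat) \<Rightarrow> 'a set \<Rightarrow> real vec set" where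
  "fix_space d \<rho> H = {v \<in> carrier_vec d. \<forall>h\<in>H. \<rho> h *\<^sub>v v = v}"

definition fix_dim :: "nat \<Rightarrow> ('a \<Rightarrow> real mat) \<Rightarrow> 'a set \<Rightarrow> nat" where
  "fix_dim d \<rho> H = vectorspace.dim class_ring
      ((module_vec TYPE(real) d)\<lparr>carrier := fix_space d \<rho> H\<rparr>)"

definition is_isotropy :: "'a set \<Rightarrow> nat \<Rightarrow> ('a \<Rightarrow> real mat) \<Rightarrow> 'a set \<Rightarrow> bool" where
  "is_isotropy K d \<rho> H \<longleftrightarrow> (\<exists>v \<in> carrier_vec d. H = {g \<in> K. \<rho> g *\<^sub>v v = v})"

definition is_left_transversal :: "('a, 'b) monoid_scheme \<Rightarrow> 'a set \<Rightarrow> 'a list \<Rightarrow> bool" where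
  "is_left_transversal G N ts \<longleftrightarrow> set ts \<subseteq> carrier G \<and>
     (\<forall>g\<in>carrier G. \<exists>!i. i < length ts \<and> g \<in> (ts ! i) <#\<^bsub>G\<^esub> N)"

definition left_transversal :: "('a, 'b) monoid_scheme \<Rightarrow> 'a set \<Rightarrow> 'a list" where
  "left_transversal G N = (SOME ts. is_left_transversal G N ts)"

definition ind_deg :: "('a, 'b) monoid_scheme \<Rightarrow> 'a set \<Rightarrow> nat \<Rightarrow> nat" where
  "ind_deg G N d = length (left_transversal G N) * d"

text \<open>Ind_N^G(\<rho>)(g) has (i,j) block \<rho>(t_i^-1 g t_j) if this lies in N, and 0 otherwise.\<close>
definition ind_rep :: "('a, 'b) monoid_scheme \<Rightarrow> 'a set \<Rightarrow> nat \<Rightarrow> ('a \<Rightarrow> real mat) \<Rightarrow> ('a \<Rightarrow> real mat)" where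
  "ind_rep G N d \<rho> = (\<lambda>g. let ts = left_transversal G N in
     mat (ind_deg G N d) (ind_deg G N d) (\<lambda>(r, c).
       let x = inv\<^bsub>G\<^esub> (ts ! (r div d)) \<otimes>\<^bsub>G\<^esub> g \<otimes>\<^bsub>G\<^esub> (ts ! (c div d)) in
       if x \<in> N then \<rho> x $$ (r mod d, c mod d) else 0))"

text \<open>Elements of RO(H) are formal differences [U] - [U'] of representations; two such
  differences [U1]-[U2] and [U3]-[U4] are equal iff U1 + U4 is isomorphic to U3 + U2.\<close>
definition RO_eq :: "'a set \<Rightarrow> nat \<times> ('a \<Rightarrow> real mat) \<Rightarrow> nat \<times> ('a \<Rightarrow> real mat)
     \<Rightarrow> nat \<times> ('a \<Rightarrow> real mat) \<Rightarrow> nat \<times> ('a \<Rightarrow> real mat) \<Rightarrow> bool" where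
  "RO_eq H U1 U2 U3 U4 \<longleftrightarrow>
     rep_iso H (fst U1 + fst U4) (rep_sum (fst U1) (snd U1) (fst U4) (snd U4))
               (fst U3 + fst U2) (rep_sum (fst U3) (snd U3) (fst U2) (snd U2))"

text \<open>Ind_N^G : RO(N) \<rightarrow> RO(G) is a monomorphism (it is additive by construction).\<close>
definition ind_RO_mono :: "('a, 'b) monoid_scheme \<Rightarrow> 'a set \<Rightarrow> bool" where
  "ind_RO_mono G N \<longleftrightarrow> (\<forall>d1 \<rho>1 d2 \<rho>2 d3 \<rho>3 d4 \<rho>4.
     is_rep G N d1 \<rho>1 \<longrightarrow> is_rep G N d2 \<rho>2 \<longrightarrow> is_rep G N d3 \<rho>3 \<longrightarrow> is_rep G N d4 \<rho>4 \<longrightarrow>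
     RO_eq (carrier G) (ind_deg G N d1, ind_rep G N d1 \<rho>1) (ind_deg G N d2, ind_rep G N d2 \<rho>2)
                       (ind_deg G N d3, ind_rep G N d3 \<rho>3) (ind_deg G N d4, ind_rep G N d4 \<rho>4) \<longrightarrow>
     RO_eq N (d1, \<rho>1) (d2, \<rho>2) (d3, \<rho>3) (d4, \<rho>4))"

definition weak_gap_condition :: "('a, 'b) monoid_scheme \<Rightarrow> 'a set \<Rightarrow> nat \<Rightarrow> ('a \<Rightarrow> real mat) \<Rightarrow> bool" where
  "weak_gap_condition G K d \<rho> \<longleftrightarrow> (\<forall>P H. subgroup P G \<longrightarrow> P \<subseteq> K \<longrightarrow> prime_power_order P \<longrightarrow>
      subgroup H G \<longrightarrow> P \<subset> H \<longrightarrow> H \<subseteq> K \<longrightarrow> fix_dim d \<rho> P \<ge> 2 * fix_dim d \<rho> H)"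

definition condition_ii :: "('a, 'b) monoid_scheme \<Rightarrow> 'a set \<Rightarrow> nat \<Rightarrow> ('a \<Rightarrow> real mat) \<Rightarrow> bool" where
  "condition_ii G K d \<rho> \<longleftrightarrow>
     (\<forall>P. subgroup P G \<longrightarrow> P \<subseteq> K \<longrightarrow> prime_power_order P \<longrightarrow> fix_dim d \<rho> P \<ge> 5) \<and>
     (\<forall>H. H \<subseteq> K \<longrightarrow> pseudocyclic G H \<longrightarrow> fix_dim d \<rho> H \<ge> 2)"

definition condition_iii :: "('a, 'b) monoid_scheme \<Rightarrow> 'a set \<Rightarrow> nat \<Rightarrow> ('a \<Rightarrow> real mat) \<Rightarrow> bool" where
  "condition_iii G K d \<rho> \<longleftrightarrow> (\<forall>H. H \<subseteq> K \<longrightarrow> pseudocyclic G H \<longrightarrow> is_isotropy K d \<rho> H)"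

end

theory Submission
  imports Defs "Jordan_Normal_Form.DL_Rank" "HOL-Algebra.SndIsomorphismGrp"
begin

definition lsub :: "nat \<Rightarrow> real vec set \<Rightarrow> bool" where
  "lsub n S \<longleftrightarrow> S \<subseteq> carrier_vec n \<and> 0\<^sub>v n \<in> S \<and> (\<forall>x\<in>S. \<forall>y\<in>S. x + y \<in> S) \<and> (\<forall>c. \<forall>x\<in>S. c \<cdot>\<^sub>v x \<in> S)"

abbreviation VS :: "nat \<Rightarrow> real vec set \<Rightarrow> (real, real vec) module" where
  "VS n S \<equiv> (module_vec TYPE(real) n)\<lparr>carrier := S\<rparr>"

definition vdim :: "nat \<Rightarrow> real vec set \<Rightarrow> nat" where
  "vdim n S = vectorspace.dim class_ring (VS n S)"

lemma lsub_submodule: "lsub n S \<Longrightarrow> submodule class_ring S (module_vec TYPE(real) n)"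
  unfolding lsub_def submodule_def by (auto simp: vec_module module_vec_simps)

lemma lsub_subspace: "lsub n S \<Longrightarrow> subspace class_ring S (module_vec TYPE(real) n)"
  using lsub_submodule vec_vs unfolding subspace_def by blast

lemma lsub_vs: "lsub n S \<Longrightarrow> vectorspace class_ring (VS n S)"
  using vectorspace.subspace_is_vs[OF vec_vs lsub_subspace] by blast

lemma lsub_fin_dim: assumes S: "lsub n S" shows "vectorspace.fin_dim class_ring (VS n S)"
proof -
  interpret V: vec_space "TYPE(real)" n .
  interpret W: vectorspace class_ring "VS n S" using lsub_vs[OF S] .
  have sm: "submodule class_ring S (module_vec TYPE(real) n)" using lsub_submodule[OF S] .
  let ?P = "\<lambda>A. A \<subseteq> carrier (VS n S) \<and> W.lin_indpt A"
  have bnd: "finite A \<and> card A \<le> n" if "?P A" for A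
  proof -
    have AS: "A \<subseteq> S" using that by simp
    have "V.lin_indpt A"
      using V.span_li_not_depend(2)[OF AS sm] that by simp
    moreover have "A \<subseteq> carrier_vec n" using AS S unfolding lsub_def by auto
    ultimately show ?thesis using V.li_le_dim[of A] V.dim_is_n by auto
  qed
  have "?P {}" using W.lin_dep_def by auto
  from maximal_exists[of ?P, OF bnd this] obtain A where A: "finite A" "maximal A ?P" by blast
  have "W.basis A" using W.max_li_is_basis[OF A(2)] .
  then show ?thesis unfolding W.fin_dim_def W.basis_def using A(1) by blast
qed

definition linon :: "nat \<Rightarrow> real vec set \<Rightarrow> nat \<Rightarrow> real vec set \<Rightarrow> (real vec \<Rightarrow> real vec) \<Rightarrow> bool" where
  "linon n A m B f \<longleftrightarrow> (\<forall>x\<in>A. f x \<in> B) \<and> (\<forall>x\<in>A. \<forall>y\<in>A. f (x + y) = f x + f y) \<and> (\<forall>c. \<forall>x\<in>A. f (c \<cdot>\<^sub>v x) = c \<cdot>\<^sub>v f x)"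

lemma linon_linear_map:
  assumes A: "lsub n A" and B: "lsub m B" and f: "linon n A m B f"
  shows "linear_map class_ring (VS n A) (VS m B) f"
proof -
  interpret VA: vectorspace class_ring "VS n A" using lsub_vs[OF A] .
  interpret VB: vectorspace class_ring "VS m B" using lsub_vs[OF B] .
  have "f \<in> LinearCombinations.module_hom class_ring (VS n A) (VS m B)"
    using f unfolding LinearCombinations.module_hom_def linon_def apply (auto simp: module_vec_simps)
    done
  then show ?thesis unfolding linear_map_def mod_hom_def mod_hom_axioms_def
    using VA.vectorspace_axioms VB.vectorspace_axioms VA.module_axioms VB.module_axioms by auto
qed

lemma lsub_image:
  assumes A: "lsub n A" and B: "lsub m B" and f: "linon n A m B f"
  shows "lsub m (f ` A)"
proof -
  have "f (0\<^sub>v n) = 0\<^sub>v m"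
  proof -
    have z: "0\<^sub>v n \<in> A" using A unfolding lsub_def by auto
    have "f (0 \<cdot>\<^sub>v 0\<^sub>v n) = 0 \<cdot>\<^sub>v f (0\<^sub>v n)" using f z unfolding linon_def by blast
    moreover have "f (0\<^sub>v n) \<in> carrier_vec m" using f z B unfolding linon_def lsub_def by auto
    moreover have "(0::real) \<cdot>\<^sub>v 0\<^sub>v n = 0\<^sub>v n" by (intro eq_vecI) auto
    moreover have "(0::real) \<cdot>\<^sub>v f (0\<^sub>v n) = 0\<^sub>v m" using calculation(2) by (intro eq_vecI) auto
    ultimately show ?thesis by simp
  qed
  moreover have "f x + f y \<in> f ` A" if "x \<in> A" "y \<in> A" for x y
  proof -
    have "f (x + y) = f x + f y" "x + y \<in> A" using that A f unfolding lsub_def linon_def by auto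
    then show ?thesis by (metis image_eqI)
  qed
  moreover have "c \<cdot>\<^sub>v f x \<in> f ` A" if "x \<in> A" for x c
  proof -
    have "f (c \<cdot>\<^sub>v x) = c \<cdot>\<^sub>v f x" "c \<cdot>\<^sub>v x \<in> A" using that A f unfolding lsub_def linon_def by auto
    then show ?thesis by (metis image_eqI)
  qed
  ultimately show ?thesis using A B f unfolding lsub_def linon_def
    by (auto simp: image_iff) (metis image_eqI)
qed

lemma dim_le_inj:
  assumes A: "lsub n A" and B: "lsub m B" and f: "linon n A m B f" and inj: "inj_on f A"
  shows "vdim n A \<le> vdim m B"
proof -
  interpret L: linear_map class_ring "VS n A" "VS m B" f using linon_linear_map[OF A B f] .
  have rn: "vectorspace.dim class_ring ((VS m B)\<lparr>carrier := L.imT\<rparr>) + vectorspace.dim class_ring ((VS n A)\<lparr>carrier := L.kerT\<rparr>) = vdim n A"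
    using L.rank_nullity[OF lsub_fin_dim[OF A]] unfolding vdim_def by simp
  have k0: "vectorspace.dim class_ring ((VS n A)\<lparr>carrier := L.kerT\<rparr>) = 0"
    using L.inj_imp_dim_ker0 inj by simp
  have im: "L.imT = f ` A" unfolding L.im_def by simp
  have sub: "subspace class_ring (f ` A) (VS m B)"
    using L.imT_is_subspace im by simp
  have "vectorspace.dim class_ring ((VS m B)\<lparr>carrier := f ` A\<rparr>) \<le> vdim m B"
    using L.W.subspace_dim[OF sub lsub_fin_dim[OF B]] lsub_fin_dim[OF lsub_image[OF A B f]]
    unfolding vdim_def by simp
  then show ?thesis using rn k0 im by simp
qed

lemma rank_nullity_vdim:
  assumes A: "lsub n A" and B: "lsub m B" and f: "linon n A m B f" and surj: "f ` A = B"
  shows "vdim n A = vdim m B + vdim n {x\<in>A. f x = 0\<^sub>v m}"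
proof -
  interpret L: linear_map class_ring "VS n A" "VS m B" f using linon_linear_map[OF A B f] .
  have rn: "vectorspace.dim class_ring ((VS m B)\<lparr>carrier := L.imT\<rparr>) + vectorspace.dim class_ring ((VS n A)\<lparr>carrier := L.kerT\<rparr>) = vdim n A"
    using L.rank_nullity[OF lsub_fin_dim[OF A]] unfolding vdim_def by simp
  have im: "L.imT = B" unfolding L.im_def using surj by simp
  have ker: "L.kerT = {x\<in>A. f x = 0\<^sub>v m}" unfolding L.ker_def by (simp add: module_vec_simps)
  show ?thesis using rn im ker unfolding vdim_def by simp
qed

lemma lsub_zero: "lsub n {0\<^sub>v n}"
  unfolding lsub_def by auto

lemma vdim_zero: "vdim n {0\<^sub>v n} = 0"
proof -
  interpret W: vectorspace class_ring "VS n {0\<^sub>v n}" using lsub_vs[OF lsub_zero] .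
  have "W.span {} = {0\<^sub>v n}" using W.span_empty by (simp add: module_vec_simps)
  then have "W.gen_set {}" by simp
  then have "W.dim \<le> card {}" using W.gen_ge_dim[of "{}"] by simp
  then show ?thesis unfolding vdim_def by simp
qed

definition blk :: "nat \<Rightarrow> nat \<Rightarrow> real vec \<Rightarrow> real vec" where
  "blk d i w = vec d (\<lambda>a. w $ (i * d + a))"

definition bprod :: "nat \<Rightarrow> nat \<Rightarrow> (nat \<Rightarrow> real vec set) \<Rightarrow> real vec set" where
  "bprod m d S = {w \<in> carrier_vec (m * d). \<forall>i<m. blk d i w \<in> S i}"

lemma blk_carrier[simp]: "blk d i w \<in> carrier_vec d" unfolding blk_def by simp

lemma dim_vec_blk[simp]: "dim_vec (blk d i w) = d" unfolding blk_def by simp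

lemma blk_index[simp]: "a < d \<Longrightarrow> blk d i w $ a = w $ (i * d + a)" unfolding blk_def by simp

lemma idx_lt: "i < m \<Longrightarrow> a < d \<Longrightarrow> i * d + a < m * (d::nat)"
proof -
  assume "i < m" "a < d"
  then have "i * d + a < i * d + d" by simp
  also have "\<dots> = Suc i * d" by simp
  also have "\<dots> \<le> m * d" using \<open>i < m\<close> by (intro mult_le_mono1) simp
  finally show ?thesis .
qed

lemma blk_add: "w \<in> carrier_vec (m*d) \<Longrightarrow> v \<in> carrier_vec (m*d) \<Longrightarrow> i < m \<Longrightarrow> blk d i (w + v) = blk d i w + blk d i v"
  by (intro eq_vecI) (auto simp: blk_def idx_lt)

lemma blk_smult: "w \<in> carrier_vec (m*d) \<Longrightarrow> i < m \<Longrightarrow> blk d i (c \<cdot>\<^sub>v w) = c \<cdot>\<^sub>v blk d i w"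
  by (intro eq_vecI) (auto simp: blk_def idx_lt)

lemma blk_zero: "i < m \<Longrightarrow> blk d i (0\<^sub>v (m*d)) = 0\<^sub>v d"
  by (intro eq_vecI) (auto simp: blk_def idx_lt)

lemma lsub_bprod: assumes "\<And>i. i < m \<Longrightarrow> lsub d (S i)" shows "lsub (m*d) (bprod m d S)"
  using assms unfolding lsub_def bprod_def by (auto simp: blk_add blk_smult blk_zero)

lemma blk_eq: assumes "w \<in> carrier_vec (m*d)" "v \<in> carrier_vec (m*d)" "\<And>i. i < m \<Longrightarrow> blk d i w = blk d i v"
  shows "w = v"
proof (rule eq_vecI)
  show "dim_vec w = dim_vec v" using assms by simp
  fix r assume "r < dim_vec v"
  then have r: "r < m * d" using assms by simp
  then have d0: "d > 0" by (cases d) auto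
  have i: "r div d < m" using r by (simp add: less_mult_imp_div_less)
  have a: "r mod d < d" using d0 by simp
  have "r = (r div d) * d + r mod d" by simp
  then have "w $ r = blk d (r div d) w $ (r mod d)" "v $ r = blk d (r div d) v $ (r mod d)"
    using a by (metis blk_index)+
  then show "w $ r = v $ r" using assms(3)[OF i] by simp
qed

definition mkblk :: "nat \<Rightarrow> nat \<Rightarrow> (nat \<Rightarrow> real vec) \<Rightarrow> real vec" where
  "mkblk m d f = vec (m * d) (\<lambda>r. f (r div d) $ (r mod d))"

lemma mkblk_carrier[simp]: "mkblk m d f \<in> carrier_vec (m*d)" unfolding mkblk_def by simp

lemma vec_self: "x \<in> carrier_vec d \<Longrightarrow> vec d (\<lambda>a. x $ a) = x"
  by (intro eq_vecI) auto

lemma dim_mkblk[simp]: "dim_vec (mkblk m d f) = m * d" unfolding mkblk_def by simp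

lemma blk_mkblk[simp]: "i < m \<Longrightarrow> blk d i (mkblk m d f) = vec d (\<lambda>a. f i $ a)"
  by (intro eq_vecI) (auto simp: mkblk_def idx_lt)

lemma blk_mkblk'[simp]: "i < m \<Longrightarrow> f i \<in> carrier_vec d \<Longrightarrow> blk d i (mkblk m d f) = f i"
  by (intro eq_vecI) (auto simp: mkblk_def idx_lt)


lemma vdim_eq_mutual:
  assumes "lsub n A" "lsub m B" "linon n A m B f" "inj_on f A" "linon m B n A g" "inj_on g B"
  shows "vdim n A = vdim m B"
  using dim_le_inj[OF assms(1-4)] dim_le_inj[OF assms(2,1,5,6)] by simp

lemma carrier_vec_0: "carrier_vec 0 = {0\<^sub>v 0}"
  by (auto intro!: eq_vecI)

definition trunc :: "nat \<Rightarrow> real vec \<Rightarrow> real vec" where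
  "trunc k w = vec k (\<lambda>r. w $ r)"

lemma trunc_carrier[simp]: "trunc k w \<in> carrier_vec k" unfolding trunc_def by simp

lemma blk_trunc: "i < m \<Longrightarrow> blk d i (trunc (m*d) w) = blk d i w"
  by (intro eq_vecI) (auto simp: blk_def trunc_def idx_lt)

lemma vdim_bprod: "(\<And>i. i < m \<Longrightarrow> lsub d (S i)) \<Longrightarrow> vdim (m*d) (bprod m d S) = (\<Sum>i<m. vdim d (S i))"
proof (induction m)
  case 0
  have "bprod 0 d S = {0\<^sub>v 0}" unfolding bprod_def using carrier_vec_0 by auto
  then show ?case using vdim_zero[of 0] by simp
next
  case (Suc m)
  let ?A = "bprod (Suc m) d S" and ?B = "bprod m d S"
  have A: "lsub (Suc m * d) ?A" using lsub_bprod Suc.prems by blast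
  have B: "lsub (m * d) ?B" using lsub_bprod Suc.prems by simp
  have le: "m * d \<le> Suc m * d" by simp
  have lin: "linon (Suc m * d) ?A (m*d) ?B (trunc (m*d))"
    unfolding linon_def
  proof (intro conjI ballI allI)
    fix x assume x: "x \<in> ?A"
    show "trunc (m * d) x \<in> ?B" using x unfolding bprod_def by (auto simp: blk_trunc)
  next
    fix x y assume "x \<in> ?A" "y \<in> ?A"
    then show "trunc (m * d) (x + y) = trunc (m * d) x + trunc (m * d) y"
      unfolding bprod_def trunc_def using le by (intro eq_vecI) auto
  next
    fix c x assume "x \<in> ?A"
    then show "trunc (m * d) (c \<cdot>\<^sub>v x) = c \<cdot>\<^sub>v trunc (m * d) x"
      unfolding bprod_def trunc_def using le by (intro eq_vecI) auto
  qed
  have surj: "trunc (m*d) ` ?A = ?B"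
  proof
    show "trunc (m*d) ` ?A \<subseteq> ?B" using lin unfolding linon_def by auto
    show "?B \<subseteq> trunc (m*d) ` ?A"
    proof
      fix v assume v: "v \<in> ?B"
      define w where "w = vec (Suc m * d) (\<lambda>r. if r < m*d then v $ r else 0)"
      have "blk d i w = blk d i v" if "i < m" for i
        using that unfolding w_def by (intro eq_vecI) (auto simp: blk_def idx_lt[OF that] trans_less_add2)
      moreover have "blk d m w = 0\<^sub>v d"
        unfolding w_def by (intro eq_vecI) (auto simp: blk_def)
      moreover have "0\<^sub>v d \<in> S m" using Suc.prems[of m] unfolding lsub_def by auto
      ultimately have "w \<in> ?A" using v unfolding bprod_def w_def
        by (auto simp: less_Suc_eq)
      moreover have "trunc (m*d) w = v" using v unfolding w_def trunc_def bprod_def by (intro eq_vecI) auto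
      ultimately show "v \<in> trunc (m*d) ` ?A" by blast
    qed
  qed
  define S' where "S' = (\<lambda>i. if i < m then {0\<^sub>v d} else S m)"
  have ker: "{x \<in> ?A. trunc (m*d) x = 0\<^sub>v (m*d)} = bprod (Suc m) d S'"
  proof (intro subset_antisym subsetI)
    fix x assume x: "x \<in> {x \<in> ?A. trunc (m*d) x = 0\<^sub>v (m*d)}"
    have "blk d i x = 0\<^sub>v d" if "i < m" for i
      using x blk_trunc[OF that, of d x] blk_zero[OF that, of d] by simp
    then show "x \<in> bprod (Suc m) d S'" using x unfolding bprod_def S'_def
      by (auto simp: less_Suc_eq)
  next
    fix x assume x: "x \<in> bprod (Suc m) d S'"
    have "trunc (m*d) x = 0\<^sub>v (m*d)"
    proof (rule blk_eq)
      show "trunc (m*d) x \<in> carrier_vec (m*d)" by (simp add: trunc_def)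
      fix i assume i: "i < m"
      then show "blk d i (trunc (m * d) x) = blk d i (0\<^sub>v (m * d))"
      proof -
        have i': "i < Suc m" using i by simp
        have "\<forall>i<Suc m. blk d i x \<in> S' i" using x unfolding bprod_def by auto
        then have "blk d i x \<in> S' i" using i' by blast
        then have "blk d i x \<in> (if i < m then {0\<^sub>v d} else S m)" unfolding S'_def by simp
        then show ?thesis using i by (simp add: blk_trunc blk_zero)
      qed
    qed simp
    moreover have "x \<in> ?A"
      using x Suc.prems unfolding bprod_def S'_def lsub_def
      by (auto simp: less_Suc_eq)
    ultimately show "x \<in> {x \<in> ?A. trunc (m*d) x = 0\<^sub>v (m*d)}" by simp
  qed
  have K: "lsub (Suc m * d) (bprod (Suc m) d S')"
    using lsub_bprod[of "Suc m" d S'] Suc.prems lsub_zero unfolding S'_def by auto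
  have Sm: "lsub d (S m)" using Suc.prems by simp
  have kd: "vdim (Suc m * d) (bprod (Suc m) d S') = vdim d (S m)"
  proof (rule vdim_eq_mutual[OF K Sm])
    show "linon (Suc m * d) (bprod (Suc m) d S') d (S m) (blk d m)"
      unfolding linon_def bprod_def S'_def
      by (auto simp: blk_add blk_smult)
    show "inj_on (blk d m) (bprod (Suc m) d S')"
    proof
      fix x y assume x: "x \<in> bprod (Suc m) d S'" and y: "y \<in> bprod (Suc m) d S'" and e: "blk d m x = blk d m y"
      show "x = y"
        by (rule blk_eq[of x "Suc m" d y]) (use x y e in \<open>auto simp: bprod_def S'_def less_Suc_eq\<close>)
    qed
    let ?g = "\<lambda>v. vec (Suc m * d) (\<lambda>r. if r < m * d then 0 else v $ (r - m * d))"
    have gb: "blk d i (?g v) = (if i = m then v else 0\<^sub>v d)" if "i < Suc m" "v \<in> carrier_vec d" for i v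
    proof (cases "i = m")
      case True
      then show ?thesis using that by (intro eq_vecI) (auto simp: blk_def)
    next
      case False
      then have "i < m" using that by simp
      then show ?thesis using False that by (intro eq_vecI) (auto simp: blk_def idx_lt[OF \<open>i < m\<close>] trans_less_add2)
    qed
    show "linon d (S m) (Suc m * d) (bprod (Suc m) d S') ?g"
      unfolding linon_def
    proof (intro conjI ballI allI)
      fix x assume x: "x \<in> S m"
      have xc: "x \<in> carrier_vec d" using Sm x unfolding lsub_def by auto
      show "?g x \<in> bprod (Suc m) d S'"
      proof -
        have "?g x \<in> carrier_vec (Suc m * d)" by (rule carrier_vecI) simp
        moreover have "blk d i (?g x) \<in> (if i < m then {0\<^sub>v d} else S m)" if i: "i < Suc m" for i
          using gb[OF i xc] x i by auto
        ultimately show ?thesis unfolding bprod_def S'_def by simp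
      qed
    next
      fix x y assume x: "x \<in> S m" and y: "y \<in> S m"
      have "x \<in> carrier_vec d" "y \<in> carrier_vec d" using Sm x y unfolding lsub_def by auto
      then show "?g (x + y) = ?g x + ?g y"
        by (intro eq_vecI) auto
    next
      fix c x assume x: "x \<in> S m"
      have "x \<in> carrier_vec d" using Sm x unfolding lsub_def by auto
      then show "?g (c \<cdot>\<^sub>v x) = c \<cdot>\<^sub>v ?g x"
        by (intro eq_vecI) auto
    qed
    show "inj_on ?g (S m)"
    proof
      fix x y assume x: "x \<in> S m" and y: "y \<in> S m" and e: "?g x = ?g y"
      have "x \<in> carrier_vec d" "y \<in> carrier_vec d" using Sm x y unfolding lsub_def by auto
      then show "x = y" using arg_cong[OF e, of "blk d m"] gb[of m] by simp
    qed
  qed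
  have "vdim (Suc m * d) ?A = vdim (m*d) ?B + vdim (Suc m * d) (bprod (Suc m) d S')"
    using rank_nullity_vdim[OF A B lin surj] ker by simp
  then show ?case using Suc.IH Suc.prems kd by simp
qed

locale indctx = normal N G for N and G (structure) +
  fixes d :: nat and \<rho> :: "'a \<Rightarrow> real mat"
  assumes fin: "finite (carrier G)" and rep: "is_rep G N d \<rho>"
begin

lemma lcos_iff: "a \<in> carrier G \<Longrightarrow> g \<in> carrier G \<Longrightarrow> g \<in> a <# N \<longleftrightarrow> inv a \<otimes> g \<in> N"
proof
  assume a: "a \<in> carrier G" and g: "g \<in> carrier G" and "g \<in> a <# N"
  then obtain h where h: "h \<in> N" "g = a \<otimes> h" unfolding l_coset_def by blast
  then have "inv a \<otimes> g = h" using a by (simp add: m_assoc[symmetric])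
  then show "inv a \<otimes> g \<in> N" using h by simp
next
  assume a: "a \<in> carrier G" and g: "g \<in> carrier G" and "inv a \<otimes> g \<in> N"
  moreover have "a \<otimes> (inv a \<otimes> g) = g" using a g by (simp add: m_assoc[symmetric])
  ultimately show "g \<in> a <# N" unfolding l_coset_def by force
qed

lemma lcos_eq: assumes a: "a \<in> carrier G" and g: "g \<in> carrier G" and "g \<in> a <# N"
  shows "g <# N = a <# N"
proof -
  have ag: "inv a \<otimes> g \<in> N" using lcos_iff assms by blast
  have "x \<in> g <# N \<longleftrightarrow> x \<in> a <# N" if x: "x \<in> carrier G" for x
  proof -
    have "inv a \<otimes> x = (inv a \<otimes> g) \<otimes> (inv g \<otimes> x)" using a g x
      by (metis inv_closed m_assoc m_closed r_inv l_one)
    moreover have "inv g \<otimes> x = inv (inv a \<otimes> g) \<otimes> (inv a \<otimes> x)"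
    proof -
      have "inv (inv a \<otimes> g) = inv g \<otimes> a" using a g by (simp add: inv_mult_group)
      moreover have "(inv g \<otimes> a) \<otimes> (inv a \<otimes> x) = inv g \<otimes> x" using a g x
        by (metis inv_closed m_assoc m_closed r_inv l_one)
      ultimately show ?thesis by simp
    qed
    ultimately show ?thesis using lcos_iff[OF a x] lcos_iff[OF g x] ag
      by (metis a g inv_closed m_closed m_inv_closed subgroup_axioms subgroup.m_closed x)
  qed
  moreover have "g <# N \<subseteq> carrier G" "a <# N \<subseteq> carrier G" using l_coset_subset_G[OF subset a] l_coset_subset_G[OF subset g] by auto
  ultimately show ?thesis by blast
qed

lemma transversal_exists: "\<exists>ts. is_left_transversal G N ts"
proof -
  let ?L = "(\<lambda>g. l_coset G g N) ` carrier G"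
  have "finite ?L" using fin by simp
  then obtain xs where xs: "set xs = ?L" "distinct xs" using finite_distinct_list by blast
  define r where "r = (\<lambda>C. SOME g. g \<in> carrier G \<and> C = g <# N)"
  have r: "r C \<in> carrier G \<and> C = r C <# N" if "C \<in> ?L" for C
    using that unfolding r_def by (rule imageE) (rule someI, blast)
  define ts where "ts = map r xs"
  have "is_left_transversal G N ts" unfolding is_left_transversal_def
  proof (intro conjI ballI)
    show "set ts \<subseteq> carrier G" unfolding ts_def using r xs by auto
    fix g assume g: "g \<in> carrier G"
    then have "g <# N \<in> set xs" using xs by auto
    then obtain i where i: "i < length xs" "xs ! i = g <# N" by (metis in_set_conv_nth)
    have "xs ! i \<in> ?L" using i xs(1) nth_mem by metis
    from r[OF this] have ri: "r (xs ! i) \<in> carrier G" "xs ! i = r (xs ! i) <# N" by blast+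
    have gi: "g \<in> ts ! i <# N" unfolding ts_def using i ri g lcos_iff[OF g g] by simp
    show "\<exists>!i. i < length ts \<and> g \<in> ts ! i <# N"
    proof (rule ex1I[of _ i])
      show "i < length ts \<and> g \<in> ts ! i <# N" using gi i unfolding ts_def by simp
      fix j assume j: "j < length ts \<and> g \<in> ts ! j <# N"
      have "xs ! j \<in> ?L" using j xs(1) nth_mem unfolding ts_def by (metis length_map)
      from r[OF this] have rj: "r (xs ! j) \<in> carrier G" "xs ! j = r (xs ! j) <# N" by blast+
      have "map r xs ! j = r (xs ! j)" using j unfolding ts_def by simp
      then have "g \<in> r (xs ! j) <# N" using j unfolding ts_def by metis
      then have "xs ! j = g <# N" using lcos_eq[OF rj(1) g] rj by simp
      then show "j = i" using i j xs(2) nth_eq_iff_index_eq[OF xs(2), of j i] unfolding ts_def by simp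
    qed
  qed
  then show ?thesis by blast
qed

definition ts where "ts = left_transversal G N"
definition m where "m = length ts"
definition t where "t i = ts ! i"

lemma ts_transversal: "is_left_transversal G N ts"
  unfolding ts_def left_transversal_def using transversal_exists by (rule someI_ex)

lemma t_carrier[simp]: "i < m \<Longrightarrow> t i \<in> carrier G"
  using ts_transversal unfolding is_left_transversal_def t_def m_def by (auto simp: nth_mem subset_iff)

lemma unique_coset: "g \<in> carrier G \<Longrightarrow> \<exists>!i. i < m \<and> inv (t i) \<otimes> g \<in> N"
  using ts_transversal lcos_iff unfolding is_left_transversal_def t_def m_def
  by (smt (verit) nth_mem subsetD)


lemma inv_in_N: "x \<in> carrier G \<Longrightarrow> inv x \<in> N \<longleftrightarrow> x \<in> N"
  by (metis inv_inv m_inv_closed)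

definition xg :: "nat \<Rightarrow> 'a \<Rightarrow> nat \<Rightarrow> 'a" where
  "xg i g j = inv (t i) \<otimes> g \<otimes> t j"

lemma xg_carrier[simp]: "i < m \<Longrightarrow> j < m \<Longrightarrow> g \<in> carrier G \<Longrightarrow> xg i g j \<in> carrier G"
  unfolding xg_def by simp

lemma ex1_sg: assumes g: "g \<in> carrier G" and i: "i < m" shows "\<exists>!j. j < m \<and> xg i g j \<in> N"
proof -
  have e: "inv (t j) \<otimes> (inv g \<otimes> t i) \<in> N \<longleftrightarrow> xg i g j \<in> N" if j: "j < m" for j
  proof -
    have "inv (inv (t j) \<otimes> (inv g \<otimes> t i)) = xg i g j" unfolding xg_def using g i j
      by (simp add: inv_mult_group m_assoc)
    then show ?thesis using inv_in_N g i j by (metis inv_closed m_closed t_carrier)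
  qed
  from unique_coset[of "inv g \<otimes> t i"] g i obtain j where
    j: "j < m" "inv (t j) \<otimes> (inv g \<otimes> t i) \<in> N" and u: "\<And>j'. j' < m \<and> inv (t j') \<otimes> (inv g \<otimes> t i) \<in> N \<Longrightarrow> j' = j"
    by auto
  show ?thesis using j u e by blast
qed

definition sg :: "'a \<Rightarrow> nat \<Rightarrow> nat" where
  "sg g i = (THE j. j < m \<and> xg i g j \<in> N)"

lemma sg: assumes "g \<in> carrier G" "i < m" shows "sg g i < m" "xg i g (sg g i) \<in> N"
  using theI'[OF ex1_sg[OF assms]] unfolding sg_def by auto

lemma sg_unique: assumes "g \<in> carrier G" "i < m" "j < m" "xg i g j \<in> N" shows "sg g i = j"
  using ex1_sg[OF assms(1,2)] sg[OF assms(1,2)] assms(3,4) by blast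

lemma sum_blocks: "(\<Sum>c\<in>{0..<m'*d}. f c) = (\<Sum>j<m'. \<Sum>b<d. f (j*d+b))"
proof -
  have "(\<Sum>c\<in>{0..<m'*d}. f c) = (\<Sum>j<m'. sum f {j*d..<j*d+d})"
    using sum.nat_group[of f d m'] by (simp add: atLeast0LessThan)
  also have "\<dots> = (\<Sum>j<m'. \<Sum>b<d. f (j*d+b))"
  proof (rule sum.cong[OF refl])
    fix j
    have "sum f {0 + j*d..<d + j*d} = (\<Sum>b\<in>{0..<d}. f (b + j*d))" by (rule sum.shift_bounds_nat_ivl)
    then show "sum f {j*d..<j*d+d} = (\<Sum>b<d. f (j*d+b))" by (simp add: atLeast0LessThan add.commute)
  qed
  finally show ?thesis .
qed

abbreviation IR where "IR \<equiv> ind_rep G N d \<rho>"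

lemma ind_deg_eq: "ind_deg G N d = m * d"
  unfolding ind_deg_def m_def ts_def by simp

lemma IR_carrier[simp]: "IR g \<in> carrier_mat (m*d) (m*d)"
  unfolding ind_rep_def Let_def ind_deg_eq by simp

lemma IR_entry: assumes "r < m*d" "c < m*d"
  shows "IR g $$ (r, c) = (if xg (r div d) g (c div d) \<in> N then \<rho> (xg (r div d) g (c div d)) $$ (r mod d, c mod d) else 0)"
  using assms unfolding ind_rep_def Let_def ind_deg_eq xg_def t_def ts_def by simp

lemma rho_carrier[simp]: "x \<in> N \<Longrightarrow> \<rho> x \<in> carrier_mat d d"
  using rep unfolding is_rep_def by auto

lemma rho_dim[simp]: "x \<in> N \<Longrightarrow> dim_row (\<rho> x) = d" "x \<in> N \<Longrightarrow> dim_col (\<rho> x) = d"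
  by (metis carrier_matD rho_carrier)+

lemma IR_dim[simp]: "dim_row (IR g) = m*d" "dim_col (IR g) = m*d"
  by (metis carrier_matD IR_carrier)+

lemma IR_blk: assumes g: "g \<in> carrier G" and w: "w \<in> carrier_vec (m*d)" and i: "i < m"
  shows "blk d i (IR g *\<^sub>v w) = \<rho> (xg i g (sg g i)) *\<^sub>v blk d (sg g i) w"
proof (rule eq_vecI)
  let ?j = "sg g i"
  have j: "?j < m" "xg i g ?j \<in> N" using sg[OF g i] by auto
  show "dim_vec (blk d i (IR g *\<^sub>v w)) = dim_vec (\<rho> (xg i g ?j) *\<^sub>v blk d ?j w)"
    using j by simp
  fix a assume "a < dim_vec (\<rho> (xg i g ?j) *\<^sub>v blk d ?j w)"
  then have a: "a < d" using j by simp
  have r: "i*d + a < m*d" using idx_lt[OF i a] .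
  have rdiv: "(i*d+a) div d = i" "(i*d+a) mod d = a" using a by auto
  have "blk d i (IR g *\<^sub>v w) $ a = (IR g *\<^sub>v w) $ (i*d+a)" using a by simp
  also have "\<dots> = (\<Sum>c\<in>{0..<m*d}. IR g $$ (i*d+a, c) * w $ c)"
    using r w by (simp add: scalar_prod_def)
  also have "\<dots> = (\<Sum>k<m. \<Sum>b<d. IR g $$ (i*d+a, k*d+b) * w $ (k*d+b))"
    by (rule sum_blocks)
  also have "\<dots> = (\<Sum>b<d. IR g $$ (i*d+a, ?j*d+b) * w $ (?j*d+b))"
  proof (rule sum.remove[of "{..<m}" ?j, THEN trans])
    show "finite {..<m}" by simp
    show "?j \<in> {..<m}" using j by simp
    have "(\<Sum>k\<in>{..<m} - {?j}. \<Sum>b<d. IR g $$ (i*d+a, k*d+b) * w $ (k*d+b)) = 0"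
    proof (rule sum.neutral, intro ballI)
      fix k assume k: "k \<in> {..<m} - {?j}"
      then have kN: "xg i g k \<notin> N" using sg_unique[OF g i, of k] by auto
      show "(\<Sum>b<d. IR g $$ (i*d+a, k*d+b) * w $ (k*d+b)) = 0"
      proof (rule sum.neutral, intro ballI)
        fix b assume "b \<in> {..<d}"
        then have b: "b < d" by simp
        have "k*d+b < m*d" using idx_lt[OF _ b, of k m] k by simp
        moreover have "(k*d+b) div d = k" "(k*d+b) mod d = b" using b by auto
        ultimately show "IR g $$ (i*d+a, k*d+b) * w $ (k*d+b) = 0"
          using IR_entry[OF r] kN rdiv by simp
      qed
    qed
    then show "(\<Sum>b<d. IR g $$ (i*d+a, ?j*d+b) * w $ (?j*d+b)) + (\<Sum>k\<in>{..<m} - {?j}. \<Sum>b<d. IR g $$ (i*d+a, k*d+b) * w $ (k*d+b)) = (\<Sum>b<d. IR g $$ (i*d+a, ?j*d+b) * w $ (?j*d+b))"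
      by simp
  qed
  also have "\<dots> = (\<Sum>b<d. \<rho> (xg i g ?j) $$ (a, b) * blk d ?j w $ b)"
  proof (rule sum.cong[OF refl])
    fix b assume "b \<in> {..<d}"
    then have b: "b < d" by simp
    have "?j*d+b < m*d" using idx_lt[OF j(1) b] .
    moreover have "(?j*d+b) div d = ?j" "(?j*d+b) mod d = b" using b by auto
    ultimately show "IR g $$ (i*d+a, ?j*d+b) * w $ (?j*d+b) = \<rho> (xg i g ?j) $$ (a, b) * blk d ?j w $ b"
      using IR_entry[OF r] j rdiv b by simp
  qed
  also have "\<dots> = (\<rho> (xg i g ?j) *\<^sub>v blk d ?j w) $ a"
    using a j by (simp add: scalar_prod_def atLeast0LessThan)
  finally show "blk d i (IR g *\<^sub>v w) $ a = (\<rho> (xg i g ?j) *\<^sub>v blk d ?j w) $ a" .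
qed


lemma rho_one: "\<rho> \<one> = 1\<^sub>m d" using rep unfolding is_rep_def by auto
lemma rho_mult: "a \<in> N \<Longrightarrow> b \<in> N \<Longrightarrow> \<rho> (a \<otimes> b) = \<rho> a * \<rho> b"
  using rep unfolding is_rep_def by auto

lemma IR_vec_carrier[simp]: "w \<in> carrier_vec (m*d) \<Longrightarrow> IR g *\<^sub>v w \<in> carrier_vec (m*d)"
  using IR_carrier by (rule mult_mat_vec_carrier)

lemma xg_mult: assumes "i < m" "j < m" "k < m" "g \<in> carrier G" "h \<in> carrier G"
  shows "xg i g j \<otimes> xg j h k = xg i (g \<otimes> h) k"
  using assms unfolding xg_def
  by (simp add: m_assoc) (metis assms(2) inv_closed l_one m_assoc m_closed r_inv t_carrier)

lemma sg_one: "i < m \<Longrightarrow> sg \<one> i = i"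
  by (rule sg_unique) (auto simp: xg_def)

lemma IR_one: assumes w: "w \<in> carrier_vec (m*d)" shows "IR \<one> *\<^sub>v w = w"
proof (rule blk_eq[of _ m d])
  fix i assume i: "i < m"
  have "xg i \<one> i = \<one>" unfolding xg_def using i by simp
  then show "blk d i (IR \<one> *\<^sub>v w) = blk d i w"
    using IR_blk[OF one_closed w i] sg_one[OF i] rho_one by simp
qed (use w in auto)

lemma IR_mult: assumes g: "g \<in> carrier G" and h: "h \<in> carrier G" and w: "w \<in> carrier_vec (m*d)"
  shows "IR (g \<otimes> h) *\<^sub>v w = IR g *\<^sub>v (IR h *\<^sub>v w)"
proof (rule blk_eq[of _ m d])
  fix i assume i: "i < m"
  define j where "j = sg g i"
  define k where "k = sg h j"
  have j: "j < m" "xg i g j \<in> N" using sg[OF g i] unfolding j_def by auto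
  have k: "k < m" "xg j h k \<in> N" using sg[OF h j(1)] unfolding k_def by auto
  have gh: "g \<otimes> h \<in> carrier G" using g h by simp
  have x: "xg i (g \<otimes> h) k = xg i g j \<otimes> xg j h k" using xg_mult[OF i j(1) k(1) g h] by simp
  have kk: "sg (g \<otimes> h) i = k" using sg_unique[OF gh i k(1)] x j k by simp
  have "blk d i (IR (g \<otimes> h) *\<^sub>v w) = \<rho> (xg i g j \<otimes> xg j h k) *\<^sub>v blk d k w"
    using IR_blk[OF gh w i] kk x by simp
  also have "\<dots> = \<rho> (xg i g j) *\<^sub>v (\<rho> (xg j h k) *\<^sub>v blk d k w)"
    using rho_mult[OF j(2) k(2)] assoc_mult_mat_vec[OF rho_carrier[OF j(2)] rho_carrier[OF k(2)] blk_carrier] by simp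
  also have "\<dots> = blk d i (IR g *\<^sub>v (IR h *\<^sub>v w))"
    using IR_blk[OF g _ i, of "IR h *\<^sub>v w"] IR_blk[OF h w j(1)] w unfolding j_def k_def by simp
  finally show "blk d i (IR (g \<otimes> h) *\<^sub>v w) = blk d i (IR g *\<^sub>v (IR h *\<^sub>v w))" .
qed (use w in auto)

end

lemma mat_vec_zero[simp]: "A \<in> carrier_mat n n \<Longrightarrow> A *\<^sub>v 0\<^sub>v n = (0\<^sub>v n :: real vec)"
  by (intro eq_vecI) (auto simp: scalar_prod_def)

lemma lsub_fix_space: assumes "\<And>h. h \<in> H \<Longrightarrow> A h \<in> carrier_mat n n"
  shows "lsub n (fix_space n A H)"
  unfolding lsub_def fix_space_def
proof (intro conjI ballI allI)
  show "{v \<in> carrier_vec n. \<forall>h\<in>H. A h *\<^sub>v v = v} \<subseteq> carrier_vec n" by auto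
  show "0\<^sub>v n \<in> {v \<in> carrier_vec n. \<forall>h\<in>H. A h *\<^sub>v v = v}" using assms by auto
  fix x y assume x: "x \<in> {v \<in> carrier_vec n. \<forall>h\<in>H. A h *\<^sub>v v = v}" and y: "y \<in> {v \<in> carrier_vec n. \<forall>h\<in>H. A h *\<^sub>v v = v}"
  have "A h *\<^sub>v (x + y) = x + y" if h: "h \<in> H" for h
    using mult_add_distrib_mat_vec[OF assms[OF h], of x y] x y h by simp
  then show "x + y \<in> {v \<in> carrier_vec n. \<forall>h\<in>H. A h *\<^sub>v v = v}"
    using x y by auto
next
  fix c x assume x: "x \<in> {v \<in> carrier_vec n. \<forall>h\<in>H. A h *\<^sub>v v = v}"
  then show "c \<cdot>\<^sub>v x \<in> {v \<in> carrier_vec n. \<forall>h\<in>H. A h *\<^sub>v v = v}"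
    using assms mult_mat_vec[OF assms] by auto
qed

lemma fix_dim_vdim: "fix_dim n A H = vdim n (fix_space n A H)"
  unfolding fix_dim_def vdim_def ..

context indctx
begin

lemma sg_self_iff: assumes g: "g \<in> carrier G" and i: "i < m" shows "sg g i = i \<longleftrightarrow> g \<in> N"
proof -
  have "xg i g i \<in> N \<longleftrightarrow> g \<in> N"
  proof
    assume "xg i g i \<in> N"
    then have "t i \<otimes> xg i g i \<otimes> inv (t i) \<in> N" using inv_op_closed2 i by simp
    moreover have "t i \<otimes> xg i g i \<otimes> inv (t i) = g" unfolding xg_def using g i
      by (simp add: m_assoc[symmetric]) (simp add: m_assoc)
    ultimately show "g \<in> N" by simp
  next
    assume "g \<in> N"
    then show "xg i g i \<in> N" using inv_op_closed1 i unfolding xg_def by simp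
  qed
  then show ?thesis using sg_unique[OF g i i] sg[OF g i] by auto
qed

definition cj :: "nat \<Rightarrow> 'a set \<Rightarrow> 'a set" where
  "cj i K = (\<lambda>k. xg i k i) ` K"

lemma cj_sub_N: "i < m \<Longrightarrow> K \<subseteq> N \<Longrightarrow> cj i K \<subseteq> N"
  unfolding cj_def xg_def using inv_op_closed1 by auto

lemma lsub_fixN: "J \<subseteq> N \<Longrightarrow> lsub d (fix_space d \<rho> J)"
  by (rule lsub_fix_space) auto

lemma lsub_fixG: "lsub (m*d) (fix_space (m*d) IR H)"
  by (rule lsub_fix_space) auto

lemma fixG_blk: assumes w: "w \<in> fix_space (m*d) IR H" and h: "h \<in> H" "H \<subseteq> carrier G" and i: "i < m"
  shows "blk d i w = \<rho> (xg i h (sg h i)) *\<^sub>v blk d (sg h i) w"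
proof -
  have "IR h *\<^sub>v w = w" "w \<in> carrier_vec (m*d)" using w h unfolding fix_space_def by auto
  then show ?thesis using IR_blk[of h w i] h i by auto
qed

lemma upper_bound:
  assumes H: "H \<subseteq> carrier G" and R: "R \<subseteq> {..<m}"
    and cover: "\<And>i. i < m \<Longrightarrow> \<exists>h\<in>H. sg h i \<in> R"
  shows "vdim (m*d) (fix_space (m*d) IR H) \<le> (\<Sum>i\<in>R. vdim d (fix_space d \<rho> (cj i (H \<inter> N))))"
proof -
  define S where "S = (\<lambda>i. if i \<in> R then fix_space d \<rho> (cj i (H \<inter> N)) else {0\<^sub>v d})"
  have S: "lsub d (S i)" if "i < m" for i
    unfolding S_def using lsub_fixN[OF cj_sub_N[OF that]] lsub_zero by auto
  define \<Phi> where "\<Phi> = (\<lambda>w. mkblk m d (\<lambda>i. if i \<in> R then blk d i w else 0\<^sub>v d))"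
  have \<Phi>b: "blk d i (\<Phi> w) = (if i \<in> R then blk d i w else 0\<^sub>v d)" if "i < m" for i w
    unfolding \<Phi>_def using blk_mkblk'[OF that] by simp
  let ?W = "fix_space (m*d) IR H"
  have Wc: "w \<in> carrier_vec (m*d)" if "w \<in> ?W" for w using that unfolding fix_space_def by auto
  have lin: "linon (m*d) ?W (m*d) (bprod m d S) \<Phi>"
    unfolding linon_def
  proof (intro conjI ballI allI)
    fix w assume w: "w \<in> ?W"
    have "blk d i (\<Phi> w) \<in> S i" if i: "i < m" for i
    proof (cases "i \<in> R")
      case True
      have "\<rho> y *\<^sub>v blk d i w = blk d i w" if y: "y \<in> cj i (H \<inter> N)" for y
      proof -
        obtain k where k: "k \<in> H" "k \<in> N" "y = xg i k i" using y unfolding cj_def by auto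
        have "sg k i = i" using sg_self_iff[of k i] k i H by auto
        then show ?thesis using fixG_blk[OF w k(1) H i] k by simp
      qed
      then show ?thesis using True \<Phi>b[OF i] unfolding S_def fix_space_def by auto
    next
      case False
      then show ?thesis using \<Phi>b[OF i] unfolding S_def by auto
    qed
    then show "\<Phi> w \<in> bprod m d S" unfolding bprod_def \<Phi>_def by auto
  next
    fix x y assume x: "x \<in> ?W" and y: "y \<in> ?W"
    show "\<Phi> (x + y) = \<Phi> x + \<Phi> y"
    proof (rule blk_eq[of _ m d])
      fix i assume i: "i < m"
      show "blk d i (\<Phi> (x + y)) = blk d i (\<Phi> x + \<Phi> y)"
        using \<Phi>b[OF i] blk_add[OF Wc[OF x] Wc[OF y] i] blk_add[of "\<Phi> x" m d "\<Phi> y" i] i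
        by (auto simp: \<Phi>_def)
    qed (auto simp: \<Phi>_def)
  next
    fix c x assume x: "x \<in> ?W"
    show "\<Phi> (c \<cdot>\<^sub>v x) = c \<cdot>\<^sub>v \<Phi> x"
    proof (rule blk_eq[of _ m d])
      fix i assume i: "i < m"
      show "blk d i (\<Phi> (c \<cdot>\<^sub>v x)) = blk d i (c \<cdot>\<^sub>v \<Phi> x)"
        using \<Phi>b[OF i] blk_smult[OF Wc[OF x] i] blk_smult[of "\<Phi> x" m d i c] i
        by (auto simp: \<Phi>_def)
    qed (auto simp: \<Phi>_def)
  qed
  have inj: "inj_on \<Phi> ?W"
  proof
    fix x y assume x: "x \<in> ?W" and y: "y \<in> ?W" and e: "\<Phi> x = \<Phi> y"
    show "x = y"
    proof (rule blk_eq[OF Wc[OF x] Wc[OF y]])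
      fix i assume i: "i < m"
      obtain h where h: "h \<in> H" "sg h i \<in> R" using cover[OF i] by blast
      have j: "sg h i < m" using R h by auto
      have "blk d (sg h i) x = blk d (sg h i) y" using arg_cong[OF e, of "blk d (sg h i)"] \<Phi>b[OF j] h by simp
      then show "blk d i x = blk d i y" using fixG_blk[OF x h(1) H i] fixG_blk[OF y h(1) H i] by simp
    qed
  qed
  have "vdim (m*d) ?W \<le> vdim (m*d) (bprod m d S)"
    by (rule dim_le_inj[OF lsub_fixG lsub_bprod[OF S] lin inj])
  also have "\<dots> = (\<Sum>i<m. vdim d (S i))" by (rule vdim_bprod[OF S])
  also have "\<dots> = (\<Sum>i\<in>R. vdim d (fix_space d \<rho> (cj i (H \<inter> N))))"
  proof -
    have "(\<Sum>i<m. vdim d (S i)) = (\<Sum>i<m. if i \<in> R then vdim d (fix_space d \<rho> (cj i (H \<inter> N))) else 0)"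
      unfolding S_def by (rule sum.cong) (auto simp: vdim_zero)
    also have "\<dots> = (\<Sum>i\<in>R. vdim d (fix_space d \<rho> (cj i (H \<inter> N))))"
      using R by (simp add: sum.If_cases Int_absorb1)
    finally show ?thesis .
  qed
  finally show ?thesis .
qed

end

context indctx
begin

definition avg :: "'a set \<Rightarrow> real vec \<Rightarrow> real vec" where
  "avg P u = vec (m*d) (\<lambda>r. \<Sum>p\<in>P. (IR p *\<^sub>v u) $ r)"

lemma avg_carrier[simp]: "avg P u \<in> carrier_vec (m*d)" unfolding avg_def by simp
lemma dim_avg[simp]: "dim_vec (avg P u) = m*d" unfolding avg_def by simp

lemma avg_inv: assumes P: "subgroup P G" and q: "q \<in> P" and u: "u \<in> carrier_vec (m*d)"
  shows "IR q *\<^sub>v avg P u = avg P u"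
proof (rule eq_vecI)
  show "dim_vec (IR q *\<^sub>v avg P u) = dim_vec (avg P u)" by simp
  fix r assume "r < dim_vec (avg P u)"
  then have r: "r < m*d" by simp
  have Pc: "P \<subseteq> carrier G" using subgroup.subset[OF P] .
  have qc: "q \<in> carrier G" using q Pc by auto
  have "(IR q *\<^sub>v avg P u) $ r = (\<Sum>c\<in>{0..<m*d}. IR q $$ (r, c) * (\<Sum>p\<in>P. (IR p *\<^sub>v u) $ c))"
    using r by (simp add: scalar_prod_def avg_def)
  also have "\<dots> = (\<Sum>p\<in>P. \<Sum>c\<in>{0..<m*d}. IR q $$ (r, c) * (IR p *\<^sub>v u) $ c)"
    by (simp add: sum_distrib_left sum.swap[of _ P])
  also have "\<dots> = (\<Sum>p\<in>P. (IR q *\<^sub>v (IR p *\<^sub>v u)) $ r)"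
    using r u by (simp add: scalar_prod_def)
  also have "\<dots> = (\<Sum>p\<in>P. (IR (q \<otimes> p) *\<^sub>v u) $ r)"
    using IR_mult[OF qc _ u] Pc by (intro sum.cong) auto
  also have "\<dots> = (\<Sum>p\<in>P. (IR p *\<^sub>v u) $ r)"
  proof (rule sum.reindex_bij_witness[where i="\<lambda>p. inv q \<otimes> p" and j="\<lambda>p. q \<otimes> p"])
    fix p assume p: "p \<in> P"
    then have pc: "p \<in> carrier G" using Pc by auto
    show "inv q \<otimes> (q \<otimes> p) = p" using qc pc by (simp add: m_assoc[symmetric])
    show "q \<otimes> p \<in> P" using P q p by (simp add: subgroup.m_closed)
    show "q \<otimes> (inv q \<otimes> p) = p" using qc pc by (simp add: m_assoc[symmetric])
    show "inv q \<otimes> p \<in> P" using P q p by (simp add: subgroup.m_closed subgroup.m_inv_closed)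
    show "(IR (q \<otimes> p) *\<^sub>v u) $ r = (IR (q \<otimes> p) *\<^sub>v u) $ r" by simp
  qed
  also have "\<dots> = avg P u $ r" using r by (simp add: avg_def)
  finally show "(IR q *\<^sub>v avg P u) $ r = avg P u $ r" .
qed

lemma avg_blk: assumes P: "P \<subseteq> carrier G" and u: "u \<in> carrier_vec (m*d)" and j: "j < m" and a: "a < d"
  shows "blk d j (avg P u) $ a = (\<Sum>p\<in>P. (\<rho> (xg j p (sg p j)) *\<^sub>v blk d (sg p j) u) $ a)"
proof -
  have "blk d j (avg P u) $ a = (\<Sum>p\<in>P. (IR p *\<^sub>v u) $ (j*d+a))"
    using a idx_lt[OF j a] by (simp add: avg_def)
  also have "\<dots> = (\<Sum>p\<in>P. blk d j (IR p *\<^sub>v u) $ a)" using a by simp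
  also have "\<dots> = (\<Sum>p\<in>P. (\<rho> (xg j p (sg p j)) *\<^sub>v blk d (sg p j) u) $ a)"
    using IR_blk[OF _ u j] P by (intro sum.cong) auto
  finally show ?thesis .
qed

lemma avg_add: "u \<in> carrier_vec (m*d) \<Longrightarrow> v \<in> carrier_vec (m*d) \<Longrightarrow> avg P (u + v) = avg P u + avg P v"
  unfolding avg_def by (intro eq_vecI) (auto simp: mult_add_distrib_mat_vec[OF IR_carrier] sum.distrib)

lemma avg_smult: "u \<in> carrier_vec (m*d) \<Longrightarrow> avg P (c \<cdot>\<^sub>v u) = c \<cdot>\<^sub>v avg P u"
  unfolding avg_def by (intro eq_vecI) (auto simp: mult_mat_vec[OF IR_carrier] sum_distrib_left)


lemma finite_sub: "P \<subseteq> carrier G \<Longrightarrow> finite P" using fin finite_subset by blast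

lemma card_PN_pos: assumes P: "subgroup P G" shows "card (P \<inter> N) > 0"
proof -
  have "\<one> \<in> P \<inter> N" using subgroup.one_closed[OF P] by simp
  moreover have "finite (P \<inter> N)" using finite_sub subgroup.subset[OF P] by blast
  ultimately show ?thesis by (auto simp: card_gt_0_iff)
qed

lemma avg_blk_sep:
  assumes P: "subgroup P G" and R: "R \<subseteq> {..<m}"
    and sep: "\<And>j1 j2 p. j1 \<in> R \<Longrightarrow> j2 \<in> R \<Longrightarrow> p \<in> P \<Longrightarrow> sg p j1 = j2 \<Longrightarrow> j1 = j2"
    and u: "u \<in> carrier_vec (m*d)" and uR: "\<And>k. k < m \<Longrightarrow> k \<notin> R \<Longrightarrow> blk d k u = 0\<^sub>v d"
    and j: "j \<in> R" and uj: "blk d j u \<in> fix_space d \<rho> (cj j (P \<inter> N))"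
  shows "blk d j (avg P u) = real (card (P \<inter> N)) \<cdot>\<^sub>v blk d j u"
proof (rule eq_vecI)
  have Pc: "P \<subseteq> carrier G" using subgroup.subset[OF P] .
  have jm: "j < m" using j R by auto
  fix a assume "a < dim_vec (real (card (P \<inter> N)) \<cdot>\<^sub>v blk d j u)"
  then have a: "a < d" by simp
  have trm: "(\<rho> (xg j p (sg p j)) *\<^sub>v blk d (sg p j) u) $ a = (if p \<in> N then blk d j u $ a else 0)"
    if p: "p \<in> P" for p
  proof -
    have pc: "p \<in> carrier G" using p Pc by auto
    have k: "sg p j < m" "xg j p (sg p j) \<in> N" using sg[OF pc jm] by auto
    show ?thesis
    proof (cases "sg p j \<in> R")
      case True
      then have kj: "sg p j = j" using sep[OF j True p] by simp
      then have pN: "p \<in> N" using sg_self_iff[OF pc jm] by simp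
      have "xg j p j \<in> cj j (P \<inter> N)" unfolding cj_def using p pN by auto
      then have "\<rho> (xg j p j) *\<^sub>v blk d j u = blk d j u" using uj unfolding fix_space_def by auto
      then show ?thesis using kj pN by simp
    next
      case False
      then have "p \<notin> N" using sg_self_iff[OF pc jm] j by auto
      moreover have "blk d (sg p j) u = 0\<^sub>v d" using uR[OF k(1) False] .
      ultimately show ?thesis using k a by simp
    qed
  qed
  have "blk d j (avg P u) $ a = (\<Sum>p\<in>P. (if p \<in> N then blk d j u $ a else 0))"
    using avg_blk[OF Pc u jm a] trm by simp
  also have "\<dots> = real (card (P \<inter> N)) * blk d j u $ a"
    using finite_sub[OF Pc] by (simp add: sum.If_cases Int_def)
  finally show "blk d j (avg P u) $ a = (real (card (P \<inter> N)) \<cdot>\<^sub>v blk d j u) $ a" using a by simp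
qed simp

lemma lower_bound:
  assumes P: "subgroup P G" and R: "R \<subseteq> {..<m}"
    and sep: "\<And>j1 j2 p. j1 \<in> R \<Longrightarrow> j2 \<in> R \<Longrightarrow> p \<in> P \<Longrightarrow> sg p j1 = j2 \<Longrightarrow> j1 = j2"
  shows "(\<Sum>j\<in>R. vdim d (fix_space d \<rho> (cj j (P \<inter> N)))) \<le> vdim (m*d) (fix_space (m*d) IR P)"
proof -
  have Pc: "P \<subseteq> carrier G" using subgroup.subset[OF P] .
  define S where "S = (\<lambda>i. if i \<in> R then fix_space d \<rho> (cj i (P \<inter> N)) else {0\<^sub>v d})"
  have S: "lsub d (S i)" if "i < m" for i
    unfolding S_def using lsub_fixN[OF cj_sub_N[OF that]] lsub_zero by auto
  let ?X = "bprod m d S"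
  let ?W = "fix_space (m*d) IR P"
  have Xc: "u \<in> carrier_vec (m*d)" if "u \<in> ?X" for u using that unfolding bprod_def by auto
  have XR: "blk d k u = 0\<^sub>v d" if "u \<in> ?X" "k < m" "k \<notin> R" for u k
    using that unfolding bprod_def S_def by auto
  have Xj: "blk d j u \<in> fix_space d \<rho> (cj j (P \<inter> N))" if "u \<in> ?X" "j \<in> R" for u j
    using that R unfolding bprod_def S_def by auto
  have key: "blk d j (avg P u) = real (card (P \<inter> N)) \<cdot>\<^sub>v blk d j u" if "u \<in> ?X" "j \<in> R" for u j
  proof (rule avg_blk_sep[OF P R])
    show "\<And>j1 j2 p. j1 \<in> R \<Longrightarrow> j2 \<in> R \<Longrightarrow> p \<in> P \<Longrightarrow> sg p j1 = j2 \<Longrightarrow> j1 = j2" by (rule sep)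
  qed (use Xc[OF that(1)] XR[OF that(1)] that(2) Xj[OF that] in auto)
  have lin: "linon (m*d) ?X (m*d) ?W (avg P)"
    unfolding linon_def
  proof (intro conjI ballI allI)
    fix u assume u: "u \<in> ?X"
    show "avg P u \<in> ?W" unfolding fix_space_def using avg_inv[OF P _ Xc[OF u]] by auto
  next
    fix u v assume "u \<in> ?X" "v \<in> ?X"
    then show "avg P (u + v) = avg P u + avg P v" using avg_add Xc by blast
  next
    fix c u assume "u \<in> ?X"
    then show "avg P (c \<cdot>\<^sub>v u) = c \<cdot>\<^sub>v avg P u" using avg_smult Xc by blast
  qed
  have inj: "inj_on (avg P) ?X"
  proof
    fix u v assume u: "u \<in> ?X" and v: "v \<in> ?X" and e: "avg P u = avg P v"
    show "u = v"
    proof (rule blk_eq[OF Xc[OF u] Xc[OF v]])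
      fix j assume jm: "j < m"
      show "blk d j u = blk d j v"
      proof (cases "j \<in> R")
        case True
        have "real (card (P \<inter> N)) \<cdot>\<^sub>v blk d j u = real (card (P \<inter> N)) \<cdot>\<^sub>v blk d j v"
          using key[OF u True] key[OF v True] e by simp
        moreover have "real (card (P \<inter> N)) \<noteq> 0" using card_PN_pos[OF P] by simp
        ultimately show ?thesis by (metis smult_smult_assoc blk_carrier one_smult_vec field_class.field_inverse)
      next
        case False
        then show ?thesis using XR[OF u jm] XR[OF v jm] by simp
      qed
    qed
  qed
  have "(\<Sum>j\<in>R. vdim d (fix_space d \<rho> (cj j (P \<inter> N)))) = (\<Sum>i<m. vdim d (S i))"
  proof -
    have "(\<Sum>i<m. vdim d (S i)) = (\<Sum>i<m. if i \<in> R then vdim d (fix_space d \<rho> (cj i (P \<inter> N))) else 0)"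
      unfolding S_def by (rule sum.cong) (auto simp: vdim_zero)
    also have "\<dots> = (\<Sum>i\<in>R. vdim d (fix_space d \<rho> (cj i (P \<inter> N))))"
      using R by (simp add: sum.If_cases Int_absorb1)
    finally show ?thesis by simp
  qed
  also have "\<dots> = vdim (m*d) ?X" using vdim_bprod[OF S] by simp
  also have "\<dots> \<le> vdim (m*d) ?W" by (rule dim_le_inj[OF lsub_bprod[OF S] lsub_fixG lin inj])
  finally show ?thesis .
qed

end

lemma (in group) cyclic_subgroup:
  assumes cyc: "cyclic_group G" and S: "subgroup S G"
  shows "cyclic_group (G\<lparr>carrier := S\<rparr>)"
proof -
  interpret GS: group "G\<lparr>carrier := S\<rparr>" using subgroup_imp_group[OF S] .
  obtain x where x: "x \<in> carrier G" and xr: "carrier G = range (\<lambda>n::int. x [^] n)"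
    using cyc cyclic_group by blast
  have Sc: "S \<subseteq> carrier G" using subgroup.subset[OF S] .
  show ?thesis
  proof (cases "\<exists>n::nat. n > 0 \<and> x [^] (int n) \<in> S")
    case False
    have "S = {\<one>}"
    proof
      show "S \<subseteq> {\<one>}"
      proof
        fix s assume s: "s \<in> S"
        then obtain n :: int where n: "s = x [^] n" using xr Sc by blast
        have "x [^] (-n) \<in> S" using s n subgroup.m_inv_closed[OF S s] int_pow_neg[OF x] by simp
        then have "n = 0" using False s n
          by (metis neg_0_less_iff_less not_less_iff_gr_or_eq zero_less_imp_eq_int)
        then show "s \<in> {\<one>}" using n by simp
      qed
      show "{\<one>} \<subseteq> S" using subgroup.one_closed[OF S] by simp
    qed
    then have "trivial_group (G\<lparr>carrier := S\<rparr>)"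
      unfolding trivial_group_def using GS.is_group by simp
    then show ?thesis by (rule trivial_imp_cyclic_group)
  next
    case True
    define n0 where "n0 = (LEAST n::nat. n > 0 \<and> x [^] (int n) \<in> S)"
    have n0: "n0 > 0" "x [^] (int n0) \<in> S" using LeastI_ex[OF True] unfolding n0_def by auto
    have n0min: "\<And>k::nat. k > 0 \<Longrightarrow> x [^] (int k) \<in> S \<Longrightarrow> n0 \<le> k" unfolding n0_def by (rule Least_le) simp
    define y where "y = x [^] (int n0)"
    have y: "y \<in> S" "y \<in> carrier G" using n0 x unfolding y_def by auto
    have "S = range (\<lambda>j::int. y [^] j)"
    proof
      show "range (\<lambda>j::int. y [^] j) \<subseteq> S" using subgroup_int_pow_closed[OF S y(1)] by auto
      show "S \<subseteq> range (\<lambda>j::int. y [^] j)"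
      proof
        fix s assume s: "s \<in> S"
        then obtain n :: int where n: "s = x [^] n" using xr Sc by blast
        define q where "q = n div int n0"
        define r where "r = n mod int n0"
        have nqr: "n = int n0 * q + r" unfolding q_def r_def by simp
        have r0: "0 \<le> r" "r < int n0" unfolding r_def using n0 by auto
        have "x [^] n = y [^] q \<otimes> x [^] r"
          using x unfolding y_def by (simp add: nqr int_pow_mult int_pow_pow)
        then have "x [^] r = inv (y [^] q) \<otimes> s" using n x y
          by (metis int_pow_closed inv_solve_left)
        moreover have "inv (y [^] q) \<in> S" using subgroup_int_pow_closed[OF S y(1)] subgroup.m_inv_closed[OF S] by blast
        ultimately have xr_S: "x [^] r \<in> S" using s subgroup.m_closed[OF S] by simp
        have "r = 0"
        proof (rule ccontr)
          assume "r \<noteq> 0"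
          then have "nat r > 0" using r0 by simp
          moreover have "x [^] (int (nat r)) \<in> S" using xr_S r0 by simp
          ultimately have "n0 \<le> nat r" using n0min by blast
          then show False using r0 by linarith
        qed
        then have "s = y [^] q" using n x y \<open>x [^] n = y [^] q \<otimes> x [^] r\<close> by simp
        then show "s \<in> range (\<lambda>j::int. y [^] j)" by simp
      qed
    qed
    then have "carrier (G\<lparr>carrier := S\<rparr>) = range (\<lambda>j::int. y [^]\<^bsub>G\<lparr>carrier := S\<rparr>\<^esub> j)"
      using int_pow_consistent[OF S y(1)] by simp
    then show ?thesis using GS.cyclic_group y by auto
  qed
qed


lemma (in group) card_subgroup_dvd:
  assumes I: "subgroup I G" and J: "subgroup J G" and IJ: "I \<subseteq> J"
  shows "card I dvd card J"
proof -
  interpret GJ: group "G\<lparr>carrier := J\<rparr>" using subgroup_imp_group[OF J] .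
  have "subgroup I (G\<lparr>carrier := J\<rparr>)" using subgroup_incl[OF I J IJ] .
  from GJ.lagrange[OF this] have "card (rcosets\<^bsub>G\<lparr>carrier := J\<rparr>\<^esub> I) * card I = card J"
    unfolding Coset.order_def by simp
  then show ?thesis by (metis dvd_triv_right)
qed

lemma (in group) ppo_subgroup:
  assumes "prime_power_order P" "subgroup P G" "subgroup P' G" "P' \<subseteq> P"
  shows "prime_power_order P'"
proof -
  obtain p k where pk: "prime (p::nat)" "card P = p ^ k" using assms(1) unfolding prime_power_order_def by blast
  have "card P' dvd p ^ k" using card_subgroup_dvd[OF assms(3,2,4)] pk by simp
  then obtain i where "card P' = p ^ i" using divides_primepow_nat[OF pk(1)] by blast
  then show ?thesis unfolding prime_power_order_def using pk(1) by blast
qed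

lemma (in group) pseudocyclic_inter:
  assumes Nn: "N \<lhd> G" and fin: "finite (carrier G)" and pc: "pseudocyclic G K"
  shows "pseudocyclic G (K \<inter> N)"
proof -
  have K: "subgroup K G" using pc unfolding pseudocyclic_def by blast
  obtain p k P where p: "prime (p::nat)" and PK: "P \<lhd> G\<lparr>carrier := K\<rparr>" and cP: "card P = p ^ k"
      and cyc: "cyclic_group ((G\<lparr>carrier := K\<rparr>) Mod P)"
    using pc unfolding pseudocyclic_def by blast
  have N: "subgroup N G" using Nn normal_imp_subgroup by blast
  have KN: "subgroup (K \<inter> N) G" using subgroups_Inter_pair[OF K N] .
  interpret GK: group "G\<lparr>carrier := K\<rparr>" using subgroup_imp_group[OF K] .
  have PKs: "subgroup P (G\<lparr>carrier := K\<rparr>)" using PK normal_imp_subgroup by blast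
  have P: "subgroup P G" using incl_subgroup[OF K PKs] .
  have PsK: "P \<subseteq> K" using subgroup.subset[OF PKs] by simp
  have norm': "(P \<inter> N) \<lhd> G\<lparr>carrier := K \<inter> N\<rparr>" using normal_inter[OF K N PK] .
  have PN: "subgroup (P \<inter> N) G" using subgroups_Inter_pair[OF P N] .
  have card': "\<exists>k'. card (P \<inter> N) = p ^ k'"
  proof -
    have "card (P \<inter> N) dvd p ^ k" using card_subgroup_dvd[OF PN P] cP by auto
    then show ?thesis using divides_primepow_nat[OF p] by blast
  qed
  have KNs: "subgroup (K \<inter> N) (G\<lparr>carrier := K\<rparr>)" using subgroup_incl[OF KN K] by auto
  interpret SI: second_isomorphism_grp P "G\<lparr>carrier := K\<rparr>" "K \<inter> N"
    unfolding second_isomorphism_grp_def second_isomorphism_grp_axioms_def using PK KNs by blast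
  have iso: "(\<lambda>X. the_elem ((\<lambda>g. P #>\<^bsub>G\<lparr>carrier := K\<rparr>\<^esub> g) ` X)) \<in> iso ((G\<lparr>carrier := K \<inter> N\<rparr>) Mod (P \<inter> N)) ((G\<lparr>carrier := P <#> (K \<inter> N)\<rparr>) Mod P)"
  proof -
    have e: "P \<inter> (K \<inter> N) = P \<inter> N" using PsK by blast
    show ?thesis using SI.normal_intersection_quotient_isom unfolding e by simp
  qed
  define S where "S = P <#> (K \<inter> N)"
  have S: "subgroup S (G\<lparr>carrier := K\<rparr>)" using SI.normal_set_mult_subgroup unfolding S_def by simp
  have PS: "P \<subseteq> S" using SI.H_contained_in_set_mult unfolding S_def by simp
  have sub: "subgroup (rcosets\<^bsub>G\<lparr>carrier := S\<rparr>\<^esub> P) ((G\<lparr>carrier := K\<rparr>) Mod P)"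
    using GK.normal_subgroup_factorize[OF PK PS S] by simp
  have grpQ: "group ((G\<lparr>carrier := K\<rparr>) Mod P)" using normal.factorgroup_is_group[OF PK] .
  have cycS: "cyclic_group (((G\<lparr>carrier := K\<rparr>) Mod P)\<lparr>carrier := rcosets\<^bsub>G\<lparr>carrier := S\<rparr>\<^esub> P\<rparr>)"
    using group.cyclic_subgroup[OF grpQ cyc sub] .
  have eqS: "((G\<lparr>carrier := K\<rparr>) Mod P)\<lparr>carrier := rcosets\<^bsub>G\<lparr>carrier := S\<rparr>\<^esub> P\<rparr> = (G\<lparr>carrier := S\<rparr>) Mod P"
  proof -
    have "(<#>\<^bsub>G\<lparr>carrier := K\<rparr>\<^esub>) = (<#>\<^bsub>G\<lparr>carrier := S\<rparr>\<^esub>)"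
      by (intro ext) (simp add: set_mult_def)
    then show ?thesis unfolding FactGroup_def by simp
  qed
  have SG: "subgroup S G" using incl_subgroup[OF K S] .
  have PnS: "P \<lhd> G\<lparr>carrier := S\<rparr>"
    using GK.normal_restrict_supergroup[OF S PK PS] by simp
  have grpB: "group ((G\<lparr>carrier := S\<rparr>) Mod P)" using normal.factorgroup_is_group[OF PnS] .
  have grpA: "group ((G\<lparr>carrier := K \<inter> N\<rparr>) Mod (P \<inter> N))" using normal.factorgroup_is_group[OF norm'] .
  have "cyclic_group ((G\<lparr>carrier := K \<inter> N\<rparr>) Mod (P \<inter> N))"
    using isomorphic_group_cyclicity[OF _ grpA grpB] iso cycS eqS unfolding is_iso_def S_def by auto
  then show ?thesis unfolding pseudocyclic_def using KN norm' card' p by blast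
qed

context indctx
begin

lemma sg_mult: assumes g: "g \<in> carrier G" and h: "h \<in> carrier G" and i: "i < m"
  shows "sg (g \<otimes> h) i = sg h (sg g i)"
proof -
  have j: "sg g i < m" "xg i g (sg g i) \<in> N" using sg[OF g i] by auto
  have k: "sg h (sg g i) < m" "xg (sg g i) h (sg h (sg g i)) \<in> N" using sg[OF h j(1)] by auto
  have "xg i (g \<otimes> h) (sg h (sg g i)) \<in> N"
    using xg_mult[OF i j(1) k(1) g h, symmetric] j k by simp
  then show ?thesis using sg_unique[OF _ i k(1)] g h by simp
qed

lemma sg_inv: assumes g: "g \<in> carrier G" and i: "i < m" shows "sg (inv g) (sg g i) = i"
  using sg_mult[OF g inv_closed[OF g] i] sg_one[OF i] g by simp

lemma sg_lt: "g \<in> carrier G \<Longrightarrow> i < m \<Longrightarrow> sg g i < m" using sg by blast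

lemma exists_i0: "\<exists>i0<m. t i0 \<in> N"
proof -
  obtain i where i: "i < m" "inv (t i) \<otimes> \<one> \<in> N" using unique_coset[OF one_closed] by blast
  then have "inv (t i) \<in> N" by simp
  then have "t i \<in> N" using inv_in_N[OF t_carrier[OF i(1)]] by simp
  then show ?thesis using i by blast
qed

lemma m_pos: "m > 0" using exists_i0 by auto

lemma cj_subgroup: assumes i: "i < m" and K: "subgroup K G" shows "subgroup (cj i K) G"
proof (rule subgroupI)
  have Kc: "K \<subseteq> carrier G" using subgroup.subset[OF K] .
  let ?t = "t i"
  have t: "?t \<in> carrier G" using i by simp
  show "cj i K \<subseteq> carrier G" unfolding cj_def xg_def using Kc t by auto
  show "cj i K \<noteq> {}" unfolding cj_def using subgroup.one_closed[OF K] by auto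
  fix a assume "a \<in> cj i K"
  then obtain k where k: "k \<in> K" "a = inv ?t \<otimes> k \<otimes> ?t" unfolding cj_def xg_def by auto
  have kc: "k \<in> carrier G" using k Kc by auto
  have "inv a = inv ?t \<otimes> inv k \<otimes> ?t" using k t kc by (simp add: inv_mult_group m_assoc)
  then show "inv a \<in> cj i K" unfolding cj_def xg_def using subgroup.m_inv_closed[OF K k(1)] by auto
next
  have Kc: "K \<subseteq> carrier G" using subgroup.subset[OF K] .
  let ?t = "t i"
  have t: "?t \<in> carrier G" using i by simp
  fix a b assume "a \<in> cj i K" "b \<in> cj i K"
  then obtain k l where k: "k \<in> K" "a = inv ?t \<otimes> k \<otimes> ?t" and l: "l \<in> K" "b = inv ?t \<otimes> l \<otimes> ?t"
    unfolding cj_def xg_def by auto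
  have kc: "k \<in> carrier G" "l \<in> carrier G" using k l Kc by auto
  have "a \<otimes> b = inv ?t \<otimes> (k \<otimes> l) \<otimes> ?t" using k l t kc
    by (simp add: m_assoc) (metis inv_closed l_one m_assoc m_closed r_inv t)
  then show "a \<otimes> b \<in> cj i K" unfolding cj_def xg_def using subgroup.m_closed[OF K k(1) l(1)] by auto
qed

lemma xg_inj: assumes i: "i < m" and a: "a \<in> carrier G" and b: "b \<in> carrier G" and e: "xg i a i = xg i b i"
  shows "a = b"
proof -
  have t: "t i \<in> carrier G" "inv (t i) \<in> carrier G" using i by auto
  have "inv (t i) \<otimes> a = inv (t i) \<otimes> b" using e t a b unfolding xg_def by (simp add: right_cancel)
  then show ?thesis using t a b by (simp add: Units_l_cancel[of "inv (t i)"] Units_eq)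
qed

lemma cj_card: assumes i: "i < m" and K: "K \<subseteq> carrier G" shows "card (cj i K) = card K"
proof -
  have "inj_on (\<lambda>k. xg i k i) K" using xg_inj[OF i] K by (auto simp: inj_on_def subset_iff)
  then show ?thesis unfolding cj_def by (rule card_image)
qed

lemma cj_strict: assumes i: "i < m" and K2: "K2 \<subseteq> carrier G" and s: "K1 \<subset> K2"
  shows "cj i K1 \<subset> cj i K2"
proof -
  obtain k where k: "k \<in> K2" "k \<notin> K1" using s by auto
  have "xg i k i \<notin> cj i K1" using k xg_inj[OF i] K2 s unfolding cj_def by (auto simp: subset_iff)
  moreover have "xg i k i \<in> cj i K2" using k unfolding cj_def by auto
  moreover have "cj i K1 \<subseteq> cj i K2" using s unfolding cj_def by auto
  ultimately show ?thesis by auto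
qed

lemma cj_ppo: assumes i: "i < m" and K: "K \<subseteq> carrier G" and "prime_power_order K"
  shows "prime_power_order (cj i K)"
  using assms cj_card[OF i K] unfolding prime_power_order_def by simp

lemma fix_dim_conj_le: assumes i: "i < m" and tN: "t i \<in> N" and K: "K \<subseteq> N"
  shows "vdim d (fix_space d \<rho> K) \<le> vdim d (fix_space d \<rho> (cj i K))"
proof -
  define f where "f = (\<lambda>v. \<rho> (inv (t i)) *\<^sub>v v)"
  have itN: "inv (t i) \<in> N" using tN inv_in_N i by simp
  have tc: "t i \<in> carrier G" using i by simp
  have Rt: "\<rho> (inv (t i)) \<in> carrier_mat d d" using itN by simp
  have lin: "linon d (fix_space d \<rho> K) d (fix_space d \<rho> (cj i K)) f"
    unfolding linon_def
  proof (intro conjI ballI allI)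
    fix v assume v: "v \<in> fix_space d \<rho> K"
    have vc: "v \<in> carrier_vec d" using v unfolding fix_space_def by auto
    have "\<rho> y *\<^sub>v f v = f v" if y: "y \<in> cj i K" for y
    proof -
      obtain k where k: "k \<in> K" "y = xg i k i" using y unfolding cj_def by auto
      have kN: "k \<in> N" using k K by auto
      have kc: "k \<in> carrier G" using kN by auto
      have yN: "y \<in> N" using cj_sub_N[OF i K] y by auto
      have e: "y \<otimes> inv (t i) = inv (t i) \<otimes> k" using k tc kc unfolding xg_def
        by (simp add: m_assoc)
      have "\<rho> y *\<^sub>v f v = (\<rho> y * \<rho> (inv (t i))) *\<^sub>v v" unfolding f_def
        using assoc_mult_mat_vec[OF rho_carrier[OF yN] rho_carrier[OF itN] vc] by simp
      also have "\<dots> = \<rho> (y \<otimes> inv (t i)) *\<^sub>v v" using rho_mult[OF yN itN] by simp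
      also have "\<dots> = (\<rho> (inv (t i)) * \<rho> k) *\<^sub>v v" using e rho_mult[OF itN kN] by simp
      also have "\<dots> = \<rho> (inv (t i)) *\<^sub>v (\<rho> k *\<^sub>v v)"
        using assoc_mult_mat_vec[OF rho_carrier[OF itN] rho_carrier[OF kN] vc] by simp
      also have "\<dots> = f v" using v k unfolding fix_space_def f_def by auto
      finally show ?thesis .
    qed
    then show "f v \<in> fix_space d \<rho> (cj i K)" unfolding fix_space_def f_def using Rt vc by auto
  next
    fix x y assume "x \<in> fix_space d \<rho> K" "y \<in> fix_space d \<rho> K"
    then show "f (x + y) = f x + f y" unfolding f_def fix_space_def
      using mult_add_distrib_mat_vec[OF Rt] by auto
  next
    fix c x assume "x \<in> fix_space d \<rho> K"
    then show "f (c \<cdot>\<^sub>v x) = c \<cdot>\<^sub>v f x" unfolding f_def fix_space_def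
      using mult_mat_vec[OF Rt] by auto
  qed
  have inj: "inj_on f (fix_space d \<rho> K)"
  proof
    fix x y assume x: "x \<in> fix_space d \<rho> K" and y: "y \<in> fix_space d \<rho> K" and e: "f x = f y"
    have xc: "x \<in> carrier_vec d" and yc: "y \<in> carrier_vec d" using x y unfolding fix_space_def by auto
    have "\<rho> (t i) * \<rho> (inv (t i)) = 1\<^sub>m d" using rho_mult[OF tN itN] tc rho_one by simp
    then have "\<rho> (t i) *\<^sub>v f x = x" "\<rho> (t i) *\<^sub>v f y = y" unfolding f_def
      using assoc_mult_mat_vec[OF rho_carrier[OF tN] rho_carrier[OF itN] xc]
        assoc_mult_mat_vec[OF rho_carrier[OF tN] rho_carrier[OF itN] yc] xc yc by auto
    then show "x = y" using e by metis
  qed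
  show ?thesis using dim_le_inj[OF lsub_fixN[OF K] lsub_fixN[OF cj_sub_N[OF i K]] lin inj] .
qed

end

context indctx
begin

definition orbR :: "'a set \<Rightarrow> nat set" where
  "orbR H = {i. i < m \<and> (\<forall>j<m. (\<exists>h\<in>H. sg h i = j) \<longrightarrow> i \<le> j)}"

lemma orbR_sub: "orbR H \<subseteq> {..<m}" unfolding orbR_def by auto

lemma orb_cover: assumes H: "subgroup H G" and i: "i < m" shows "\<exists>h\<in>H. sg h i \<in> orbR H"
proof -
  have Hc: "H \<subseteq> carrier G" using subgroup.subset[OF H] .
  have ex: "\<exists>j. \<exists>h\<in>H. sg h i = j" using subgroup.one_closed[OF H] by blast
  define i' where "i' = (LEAST j. \<exists>h\<in>H. sg h i = j)"
  obtain h0 where h0: "h0 \<in> H" "sg h0 i = i'" using LeastI_ex[OF ex] unfolding i'_def by blast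
  have i'm: "i' < m" using h0 sg_lt[of h0 i] Hc i by auto
  have "i' \<in> orbR H" unfolding orbR_def
  proof (intro CollectI conjI allI impI i'm)
    fix j assume j: "j < m" and "\<exists>h\<in>H. sg h i' = j"
    then obtain h' where h': "h' \<in> H" "sg h' i' = j" by blast
    have "sg (h0 \<otimes> h') i = j" using sg_mult[of h0 h' i] h0 h' Hc i by auto
    moreover have "h0 \<otimes> h' \<in> H" using subgroup.m_closed[OF H h0(1) h'(1)] .
    ultimately show "i' \<le> j" unfolding i'_def by (intro Least_le) blast
  qed
  then show ?thesis using h0 by blast
qed

lemma orb_sep: assumes H: "subgroup H G" and Q: "Q \<subseteq> H"
  and j1: "j1 \<in> orbR H" and j2: "j2 \<in> orbR H" and p: "p \<in> Q" and e: "sg p j1 = j2"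
  shows "j1 = j2"
proof -
  have Hc: "H \<subseteq> carrier G" using subgroup.subset[OF H] .
  have pH: "p \<in> H" using p Q by auto
  have m1: "j1 < m" "j2 < m" using j1 j2 unfolding orbR_def by auto
  have "j1 \<le> j2" using j1 pH e m1 unfolding orbR_def by blast
  moreover have "sg (inv p) j2 = j1" using sg_inv[of p j1] e pH Hc m1 by auto
  then have "j2 \<le> j1" using j2 subgroup.m_inv_closed[OF H pH] m1 unfolding orbR_def by blast
  ultimately show ?thesis by simp
qed

lemma weak_gap_G:
  assumes wg: "weak_gap_condition G N d \<rho>"
    and P: "subgroup P G" and H: "subgroup H G" and ppo: "prime_power_order P" and PH: "P \<subset> H"
  shows "2 * vdim (m*d) (fix_space (m*d) IR H) \<le> vdim (m*d) (fix_space (m*d) IR P)"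
proof -
  have Hc: "H \<subseteq> carrier G" using subgroup.subset[OF H] .
  have Pc: "P \<subseteq> carrier G" using subgroup.subset[OF P] .
  have PsH: "P \<subseteq> H" using PH by auto
  let ?R = "orbR H"
  have cover: "\<And>i. i < m \<Longrightarrow> \<exists>h\<in>H. sg h i \<in> ?R" using orb_cover[OF H] .
  have UB: "vdim (m*d) (fix_space (m*d) IR H) \<le> (\<Sum>i\<in>?R. vdim d (fix_space d \<rho> (cj i (H \<inter> N))))"
    using upper_bound[OF Hc orbR_sub cover] .
  have PN: "subgroup (P \<inter> N) G" using subgroups_Inter_pair[OF P is_subgroup] .
  have HN: "subgroup (H \<inter> N) G" using subgroups_Inter_pair[OF H is_subgroup] .
  have ppoPN: "prime_power_order (P \<inter> N)" using ppo_subgroup[OF ppo P PN] by auto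
  show ?thesis
  proof (cases "P \<inter> N = H \<inter> N")
    case False
    then have strict: "P \<inter> N \<subset> H \<inter> N" using PsH by auto
    have LB: "(\<Sum>i\<in>?R. vdim d (fix_space d \<rho> (cj i (P \<inter> N)))) \<le> vdim (m*d) (fix_space (m*d) IR P)"
      by (rule lower_bound[OF P orbR_sub]) (use orb_sep[OF H PsH] in blast)
    have trm: "2 * vdim d (fix_space d \<rho> (cj i (H \<inter> N))) \<le> vdim d (fix_space d \<rho> (cj i (P \<inter> N)))"
      if i: "i \<in> ?R" for i
    proof -
      have im: "i < m" using i orbR_sub by auto
      have a1: "P \<inter> N \<subseteq> carrier G" "H \<inter> N \<subseteq> carrier G" using Pc Hc by auto
      have "fix_dim d \<rho> (cj i (P \<inter> N)) \<ge> 2 * fix_dim d \<rho> (cj i (H \<inter> N))"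
        using wg unfolding weak_gap_condition_def
        using cj_subgroup[OF im PN] cj_subgroup[OF im HN] cj_sub_N[OF im, of "P \<inter> N"] cj_sub_N[OF im, of "H \<inter> N"]
          cj_ppo[OF im a1(1) ppoPN] cj_strict[OF im a1(2) strict] by blast
      then show ?thesis unfolding fix_dim_vdim .
    qed
    have "2 * vdim (m*d) (fix_space (m*d) IR H) \<le> (\<Sum>i\<in>?R. 2 * vdim d (fix_space d \<rho> (cj i (H \<inter> N))))"
      using UB by (simp add: sum_distrib_left[symmetric])
    also have "\<dots> \<le> (\<Sum>i\<in>?R. vdim d (fix_space d \<rho> (cj i (P \<inter> N))))"
      by (rule sum_mono) (rule trm)
    also have "\<dots> \<le> vdim (m*d) (fix_space (m*d) IR P)" by (rule LB)
    finally show ?thesis .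
  next
    case True
    have choice: "\<exists>h\<in>H. \<forall>p\<in>P. sg p i \<noteq> sg h i" if i: "i < m" for i
    proof (rule ccontr)
      assume "\<not> ?thesis"
      then have allp: "\<forall>h\<in>H. \<exists>p\<in>P. sg p i = sg h i" by blast
      obtain h where h: "h \<in> H" "h \<notin> P" using PH by auto
      obtain p where p: "p \<in> P" "sg p i = sg h i" using allp h by blast
      have hc: "h \<in> carrier G" and pc: "p \<in> carrier G" using h p Hc Pc by auto
      have "sg (h \<otimes> inv p) i = i" using sg_mult[OF hc inv_closed[OF pc] i] p(2)[symmetric] sg_inv[OF pc i] by simp
      then have "h \<otimes> inv p \<in> N" using sg_self_iff[of "h \<otimes> inv p" i] hc pc i by auto
      moreover have "h \<otimes> inv p \<in> H" using subgroup.m_closed[OF H h(1) subgroup.m_inv_closed[OF H]] p PsH by auto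
      ultimately have "h \<otimes> inv p \<in> P" using True by blast
      then have "(h \<otimes> inv p) \<otimes> p \<in> P" using subgroup.m_closed[OF P _ p(1)] by blast
      moreover have "(h \<otimes> inv p) \<otimes> p = h" using hc pc by (simp add: m_assoc)
      ultimately show False using h by simp
    qed
    define hh where "hh = (\<lambda>i. SOME h. h \<in> H \<and> (\<forall>p\<in>P. sg p i \<noteq> sg h i))"
    have hh: "hh i \<in> H" "\<And>p. p \<in> P \<Longrightarrow> sg p i \<noteq> sg (hh i) i" if "i < m" for i
      using someI_ex[OF choice[OF that, unfolded Bex_def]] unfolding hh_def by blast+
    have hhc: "hh i \<in> carrier G" if "i < m" for i using hh[OF that] Hc by auto
    define f where "f = (\<lambda>i. sg (hh i) i)"
    let ?R' = "f ` ?R"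
    have R'sub: "?R' \<subseteq> {..<m}"
    proof
      fix x assume "x \<in> ?R'"
      then obtain i where i: "i \<in> ?R" "x = f i" by auto
      have "i < m" using i orbR_sub by auto
      then show "x \<in> {..<m}" using i sg_lt[OF hhc] unfolding f_def by auto
    qed
    have cover': "\<exists>h\<in>H. sg h i \<in> ?R'" if i: "i < m" for i
    proof -
      obtain h where h: "h \<in> H" "sg h i \<in> ?R" using cover[OF i] by blast
      let ?i' = "sg h i"
      have i'm: "?i' < m" using h orbR_sub by auto
      have "sg (h \<otimes> hh ?i') i = f ?i'" unfolding f_def using sg_mult[of h "hh ?i'" i] h Hc hhc[OF i'm] i by auto
      moreover have "h \<otimes> hh ?i' \<in> H" using subgroup.m_closed[OF H h(1) hh(1)[OF i'm]] .
      ultimately show ?thesis using h by blast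
    qed
    have UB': "vdim (m*d) (fix_space (m*d) IR H) \<le> (\<Sum>i\<in>?R'. vdim d (fix_space d \<rho> (cj i (H \<inter> N))))"
      using upper_bound[OF Hc R'sub cover'] .
    have inR: "\<And>i. i \<in> ?R \<Longrightarrow> i < m" using orbR_sub by auto
    have sepH: "\<And>j1 j2 h. j1 \<in> ?R \<Longrightarrow> j2 \<in> ?R \<Longrightarrow> h \<in> H \<Longrightarrow> sg h j1 = j2 \<Longrightarrow> j1 = j2"
      using orb_sep[OF H subset_refl] by blast
    have disj: "?R \<inter> ?R' = {}"
    proof (rule ccontr)
      assume "?R \<inter> ?R' \<noteq> {}"
      then obtain i where i: "i \<in> ?R" "f i \<in> ?R" by auto
      have "i = f i" using sepH[OF i(1) i(2) hh(1)[OF inR[OF i(1)]]] unfolding f_def by simp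
      then have "sg \<one> i = sg (hh i) i" using sg_one inR[OF i(1)] unfolding f_def by simp
      then show False using hh(2)[OF inR[OF i(1)] subgroup.one_closed[OF P]] by simp
    qed
    have sep: "j1 = j2" if j1: "j1 \<in> ?R \<union> ?R'" and j2: "j2 \<in> ?R \<union> ?R'" and p: "p \<in> P" and e: "sg p j1 = j2" for j1 j2 p
    proof -
      have pc: "p \<in> carrier G" using p Pc by auto
      have pH: "p \<in> H" using p PsH by auto
      show ?thesis
      proof (cases "j1 \<in> ?R")
        case j1R: True
        show ?thesis
        proof (cases "j2 \<in> ?R")
          case True
          show ?thesis using orb_sep[OF H PsH j1R True p e] by blast
        next
          case False
          then obtain i where i: "i \<in> ?R" "j2 = f i" using j2 by auto
          have im: "i < m" using inR[OF i(1)] .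
          have j1m: "j1 < m" using inR[OF j1R] .
          have "sg (hh i \<otimes> inv p) i = j1"
            using sg_mult[OF hhc[OF im] inv_closed[OF pc] im] i(2) e sg_inv[OF pc j1m] unfolding f_def by simp
          moreover have "hh i \<otimes> inv p \<in> H" using subgroup.m_closed[OF H hh(1)[OF im] subgroup.m_inv_closed[OF H pH]] .
          ultimately have "i = j1" using sepH[OF i(1) j1R] by blast
          then have "sg p i = sg (hh i) i" using e i(2) unfolding f_def by simp
          then show ?thesis using hh(2)[OF im p] by simp
        qed
      next
        case False
        then obtain i1 where i1: "i1 \<in> ?R" "j1 = f i1" using j1 by auto
        have i1m: "i1 < m" using inR[OF i1(1)] .
        show ?thesis
        proof (cases "j2 \<in> ?R")
          case True
          have "sg (hh i1 \<otimes> p) i1 = j2" using sg_mult[OF hhc[OF i1m] pc i1m] i1(2) e unfolding f_def by simp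
          moreover have "hh i1 \<otimes> p \<in> H" using subgroup.m_closed[OF H hh(1)[OF i1m] pH] .
          ultimately have "i1 = j2" using sepH[OF i1(1) True] by blast
          have fm: "f i1 < m" using R'sub i1 by auto
          have "sg (inv p) i1 = f i1" using sg_inv[OF pc fm] e i1(2) \<open>i1 = j2\<close> by simp
          then show ?thesis using hh(2)[OF i1m subgroup.m_inv_closed[OF P p]] unfolding f_def by simp
        next
          case j2R': False
          then obtain i2 where i2: "i2 \<in> ?R" "j2 = f i2" using j2 by auto
          have i2m: "i2 < m" using inR[OF i2(1)] .
          have fm: "f i2 < m" using R'sub i2 by auto
          have "sg (hh i1 \<otimes> p) i1 = f i2" using sg_mult[OF hhc[OF i1m] pc i1m] i1(2) i2(2) e unfolding f_def by simp
          then have "sg ((hh i1 \<otimes> p) \<otimes> inv (hh i2)) i1 = i2"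
            using sg_mult[OF m_closed[OF hhc[OF i1m] pc] inv_closed[OF hhc[OF i2m]] i1m] sg_inv[OF hhc[OF i2m] i2m]
            unfolding f_def by simp
          moreover have "(hh i1 \<otimes> p) \<otimes> inv (hh i2) \<in> H"
            using subgroup.m_closed[OF H subgroup.m_closed[OF H hh(1)[OF i1m] pH] subgroup.m_inv_closed[OF H hh(1)[OF i2m]]] .
          ultimately have "i1 = i2" using sepH[OF i1(1) i2(1)] by blast
          then show ?thesis using i1 i2 by simp
        qed
      qed
    qed
    have RR'sub: "?R \<union> ?R' \<subseteq> {..<m}" using orbR_sub R'sub by auto
    have LB: "(\<Sum>i\<in>?R \<union> ?R'. vdim d (fix_space d \<rho> (cj i (P \<inter> N)))) \<le> vdim (m*d) (fix_space (m*d) IR P)"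
      by (rule lower_bound[OF P RR'sub]) (rule sep)
    have fin: "finite ?R" "finite ?R'" using orbR_sub R'sub finite_subset by blast+
    have "2 * vdim (m*d) (fix_space (m*d) IR H) \<le> (\<Sum>i\<in>?R. vdim d (fix_space d \<rho> (cj i (H \<inter> N)))) + (\<Sum>i\<in>?R'. vdim d (fix_space d \<rho> (cj i (H \<inter> N))))"
      using UB UB' by simp
    also have "\<dots> = (\<Sum>i\<in>?R \<union> ?R'. vdim d (fix_space d \<rho> (cj i (P \<inter> N))))"
      using sum.union_disjoint[OF fin disj, of "\<lambda>i. vdim d (fix_space d \<rho> (cj i (H \<inter> N)))"] True by simp
    also have "\<dots> \<le> vdim (m*d) (fix_space (m*d) IR P)" by (rule LB)
    finally show ?thesis .
  qed
qed

end

context indctx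
begin

lemma rho_cancel: assumes T: "T \<in> N" and x: "x \<in> carrier_vec d"
  shows "\<rho> T *\<^sub>v (\<rho> (inv T) *\<^sub>v x) = x" "\<rho> (inv T) *\<^sub>v (\<rho> T *\<^sub>v x) = x"
proof -
  have iT: "inv T \<in> N" using T inv_in_N by auto
  have Tc: "T \<in> carrier G" using T by auto
  have "\<rho> T * \<rho> (inv T) = 1\<^sub>m d" using rho_mult[OF T iT] Tc rho_one by simp
  then show "\<rho> T *\<^sub>v (\<rho> (inv T) *\<^sub>v x) = x"
    using assoc_mult_mat_vec[OF rho_carrier[OF T] rho_carrier[OF iT] x] x by simp
  have "\<rho> (inv T) * \<rho> T = 1\<^sub>m d" using rho_mult[OF iT T] Tc rho_one by simp
  then show "\<rho> (inv T) *\<^sub>v (\<rho> T *\<^sub>v x) = x"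
    using assoc_mult_mat_vec[OF rho_carrier[OF iT] rho_carrier[OF T] x] x by simp
qed

lemma cond_ii_a:
  assumes c2: "condition_ii G N d \<rho>" and P: "subgroup P G" and ppo: "prime_power_order P"
  shows "5 \<le> vdim (m*d) (fix_space (m*d) IR P)"
proof -
  have m0: "0 < m" using m_pos .
  have PN: "subgroup (P \<inter> N) G" using subgroups_Inter_pair[OF P is_subgroup] .
  have Pc: "P \<inter> N \<subseteq> carrier G" using subgroup.subset[OF P] by auto
  have ppoPN: "prime_power_order (P \<inter> N)" using ppo_subgroup[OF ppo P PN] by auto
  have "5 \<le> fix_dim d \<rho> (cj 0 (P \<inter> N))"
    using c2 unfolding condition_ii_def using cj_subgroup[OF m0 PN] cj_sub_N[OF m0, of "P \<inter> N"] cj_ppo[OF m0 Pc ppoPN] by blast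
  moreover have "(\<Sum>j\<in>{0}. vdim d (fix_space d \<rho> (cj j (P \<inter> N)))) \<le> vdim (m*d) (fix_space (m*d) IR P)"
    by (rule lower_bound[OF P]) (use m0 in auto)
  ultimately show ?thesis unfolding fix_dim_vdim by simp
qed

lemma cond_ii_b:
  assumes c2: "condition_ii G N d \<rho>" and H: "H \<subseteq> carrier G" and pc: "pseudocyclic G H"
  shows "2 \<le> vdim (m*d) (fix_space (m*d) IR H)"
proof -
  obtain i0 where i0: "i0 < m" "t i0 \<in> N" using exists_i0 by blast
  have Hs: "subgroup H G" using pc unfolding pseudocyclic_def by blast
  have pcK: "pseudocyclic G (H \<inter> N)" using pseudocyclic_inter[OF normal_axioms fin pc] .
  have "2 \<le> fix_dim d \<rho> (H \<inter> N)" using c2 pcK unfolding condition_ii_def by blast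
  also have "\<dots> \<le> vdim d (fix_space d \<rho> (cj i0 (H \<inter> N)))"
    unfolding fix_dim_vdim using fix_dim_conj_le[OF i0] by blast
  also have "\<dots> = (\<Sum>j\<in>{i0}. vdim d (fix_space d \<rho> (cj j (H \<inter> N))))" by simp
  also have "\<dots> \<le> vdim (m*d) (fix_space (m*d) IR H)"
    by (rule lower_bound[OF Hs]) (use i0 in auto)
  finally show ?thesis .
qed


lemma nonzero_stab:
  assumes c2: "condition_ii G N d \<rho>" and c3: "condition_iii G N d \<rho>" and pcK: "pseudocyclic G K" and KN: "K \<subseteq> N"
  shows "\<exists>v\<in>carrier_vec d. v \<noteq> 0\<^sub>v d \<and> K = {g \<in> N. \<rho> g *\<^sub>v v = v}"
proof -
  obtain v where v: "v \<in> carrier_vec d" "K = {g \<in> N. \<rho> g *\<^sub>v v = v}"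
    using c3 pcK KN unfolding condition_iii_def is_isotropy_def by blast
  show ?thesis
  proof (cases "v = 0\<^sub>v d")
    case False
    then show ?thesis using v by blast
  next
    case True
    then have KeqN: "K = N" using v by auto
    have "2 \<le> fix_dim d \<rho> K" using c2 pcK KN unfolding condition_ii_def by blast
    then have "fix_space d \<rho> N \<noteq> {0\<^sub>v d}" using vdim_zero KeqN unfolding fix_dim_vdim by auto
    moreover have "0\<^sub>v d \<in> fix_space d \<rho> N" unfolding fix_space_def by auto
    ultimately obtain v' where v': "v' \<in> fix_space d \<rho> N" "v' \<noteq> 0\<^sub>v d" by blast
    then have "K = {g \<in> N. \<rho> g *\<^sub>v v' = v'}" using KeqN unfolding fix_space_def by auto
    then show ?thesis using v' unfolding fix_space_def by blast
  qed
qed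

lemma cond_iii_G:
  assumes c2: "condition_ii G N d \<rho>" and c3: "condition_iii G N d \<rho>" and Hc: "H \<subseteq> carrier G" and pc: "pseudocyclic G H"
  shows "\<exists>w\<in>carrier_vec (m*d). H = {g \<in> carrier G. IR g *\<^sub>v w = w}"
proof -
  obtain i0 where i0: "i0 < m" "t i0 \<in> N" using exists_i0 by blast
  define T where "T = t i0"
  have T: "T \<in> N" "T \<in> carrier G" "inv T \<in> N" using i0 inv_in_N unfolding T_def by auto
  have Hs: "subgroup H G" using pc unfolding pseudocyclic_def by blast
  let ?K = "H \<inter> N"
  have pcK: "pseudocyclic G ?K" using pseudocyclic_inter[OF normal_axioms fin pc] .
  obtain v where v: "v \<in> carrier_vec d" "v \<noteq> 0\<^sub>v d" and Kv: "?K = {g \<in> N. \<rho> g *\<^sub>v v = v}"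
    using nonzero_stab[OF c2 c3 pcK] by blast
  define v' where "v' = \<rho> (inv T) *\<^sub>v v"
  have v'c: "v' \<in> carrier_vec d" unfolding v'_def using mult_mat_vec_carrier[OF rho_carrier[OF T(3)] v(1)] .
  have v'0: "v' \<noteq> 0\<^sub>v d"
  proof
    assume "v' = 0\<^sub>v d"
    then have "\<rho> T *\<^sub>v v' = 0\<^sub>v d" using T by simp
    then show False using rho_cancel(1)[OF T(1) v(1)] v(2) unfolding v'_def by simp
  qed
  have xgT: "xg i0 n i0 = inv T \<otimes> n \<otimes> T" for n unfolding xg_def T_def ..
  have stab: "\<rho> (xg i0 n i0) *\<^sub>v v' = v' \<longleftrightarrow> \<rho> n *\<^sub>v v = v" if n: "n \<in> N" for n
  proof -
    have nc: "n \<in> carrier G" using n by auto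
    have yN: "xg i0 n i0 \<in> N" using xgT inv_op_closed1[OF T(2) n] by simp
    have e: "xg i0 n i0 \<otimes> inv T = inv T \<otimes> n" using xgT T nc by (simp add: m_assoc)
    have "\<rho> (xg i0 n i0) *\<^sub>v v' = \<rho> (inv T) *\<^sub>v (\<rho> n *\<^sub>v v)"
    proof -
      have "\<rho> (xg i0 n i0) *\<^sub>v v' = (\<rho> (xg i0 n i0) * \<rho> (inv T)) *\<^sub>v v"
        unfolding v'_def using assoc_mult_mat_vec[OF rho_carrier[OF yN] rho_carrier[OF T(3)] v(1)] by simp
      also have "\<dots> = (\<rho> (inv T) * \<rho> n) *\<^sub>v v" using rho_mult[OF yN T(3)] rho_mult[OF T(3) n] e by simp
      also have "\<dots> = \<rho> (inv T) *\<^sub>v (\<rho> n *\<^sub>v v)"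
        using assoc_mult_mat_vec[OF rho_carrier[OF T(3)] rho_carrier[OF n] v(1)] by simp
      finally show ?thesis .
    qed
    moreover have "\<rho> (inv T) *\<^sub>v (\<rho> n *\<^sub>v v) = \<rho> (inv T) *\<^sub>v v \<longleftrightarrow> \<rho> n *\<^sub>v v = v"
      using rho_cancel(1)[OF T(1), of "\<rho> n *\<^sub>v v"] rho_cancel(1)[OF T(1) v(1)] n v(1) by (metis mult_mat_vec_carrier rho_carrier)
    ultimately show ?thesis unfolding v'_def by simp
  qed
  define u where "u = mkblk m d (\<lambda>i. if i = i0 then v' else 0\<^sub>v d)"
  have uc: "u \<in> carrier_vec (m*d)" unfolding u_def by simp
  have ub: "blk d k u = (if k = i0 then v' else 0\<^sub>v d)" if "k < m" for k
    unfolding u_def using blk_mkblk'[OF that] v'c by simp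
  define w where "w = avg H u"
  have wc: "w \<in> carrier_vec (m*d)" unfolding w_def by simp
  have winv: "IR h *\<^sub>v w = w" if "h \<in> H" for h unfolding w_def using avg_inv[OF Hs that uc] .
  have wblk: "blk d j w $ a = (\<Sum>h\<in>H. if sg h j = i0 then (\<rho> (xg j h i0) *\<^sub>v v') $ a else 0)"
    if j: "j < m" and a: "a < d" for j a
  proof -
    have "blk d j w $ a = (\<Sum>h\<in>H. (\<rho> (xg j h (sg h j)) *\<^sub>v blk d (sg h j) u) $ a)"
      unfolding w_def using avg_blk[OF Hc uc j a] .
    also have "\<dots> = (\<Sum>h\<in>H. if sg h j = i0 then (\<rho> (xg j h i0) *\<^sub>v v') $ a else 0)"
    proof (rule sum.cong[OF refl])
      fix h assume h: "h \<in> H"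
      have hc: "h \<in> carrier G" using h Hc by auto
      have k: "sg h j < m" "xg j h (sg h j) \<in> N" using sg[OF hc j] by auto
      show "(\<rho> (xg j h (sg h j)) *\<^sub>v blk d (sg h j) u) $ a = (if sg h j = i0 then (\<rho> (xg j h i0) *\<^sub>v v') $ a else 0)"
        using ub[OF k(1)] k a by auto
    qed
    finally show ?thesis .
  qed
  define c where "c = real (card ?K)"
  have c0: "c \<noteq> 0" unfolding c_def using card_PN_pos[OF Hs] by simp
  have blk0: "blk d i0 w = c \<cdot>\<^sub>v v'"
  proof (rule eq_vecI)
    fix a assume "a < dim_vec (c \<cdot>\<^sub>v v')"
    then have a: "a < d" using v'c by simp
    have "blk d i0 w $ a = (\<Sum>h\<in>H. if h \<in> N then v' $ a else 0)"
      unfolding wblk[OF i0(1) a]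
    proof (rule sum.cong[OF refl])
      fix h assume h: "h \<in> H"
      have hc: "h \<in> carrier G" using h Hc by auto
      show "(if sg h i0 = i0 then (\<rho> (xg i0 h i0) *\<^sub>v v') $ a else 0) = (if h \<in> N then v' $ a else 0)"
      proof (cases "h \<in> N")
        case True
        have "h \<in> ?K" using h True by simp
        then have "\<rho> h *\<^sub>v v = v" using Kv by auto
        then have "\<rho> (xg i0 h i0) *\<^sub>v v' = v'" using stab[OF True] by simp
        then show ?thesis using sg_self_iff[OF hc i0(1)] True by simp
      next
        case False
        then show ?thesis using sg_self_iff[OF hc i0(1)] by simp
      qed
    qed
    also have "\<dots> = c * v' $ a" unfolding c_def
      using finite_sub[OF Hc] by (simp add: sum.If_cases Int_def)
    finally show "blk d i0 w $ a = (c \<cdot>\<^sub>v v') $ a" using a v'c by simp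
  qed (use v'c in simp)
  have blk0nz: "blk d i0 w \<noteq> 0\<^sub>v d"
  proof
    assume "blk d i0 w = 0\<^sub>v d"
    then have "c \<cdot>\<^sub>v v' = 0\<^sub>v d" using blk0 by simp
    then have "(1/c) \<cdot>\<^sub>v (c \<cdot>\<^sub>v v') = 0\<^sub>v d" by (simp add: smult_vec_def) (intro eq_vecI, auto)
    then have "v' = 0\<^sub>v d" using c0 v'c by (simp add: smult_smult_assoc)
    then show False using v'0 by simp
  qed
  have "H = {g \<in> carrier G. IR g *\<^sub>v w = w}"
  proof
    show "H \<subseteq> {g \<in> carrier G. IR g *\<^sub>v w = w}" using winv Hc by auto
    show "{g \<in> carrier G. IR g *\<^sub>v w = w} \<subseteq> H"
    proof
      fix g assume "g \<in> {g \<in> carrier G. IR g *\<^sub>v w = w}"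
      then have gc: "g \<in> carrier G" and gw: "IR g *\<^sub>v w = w" by auto
      define j where "j = sg g i0"
      have j: "j < m" "xg i0 g j \<in> N" using sg[OF gc i0(1)] unfolding j_def by auto
      have "blk d i0 w = \<rho> (xg i0 g j) *\<^sub>v blk d j w" using IR_blk[OF gc wc i0(1)] gw unfolding j_def by simp
      then have bj: "blk d j w \<noteq> 0\<^sub>v d" using blk0nz j by auto
      have "\<exists>h\<in>H. sg h j = i0"
      proof (rule ccontr)
        assume "\<not> ?thesis"
        then have z: "blk d j w $ a = 0" if "a < d" for a using wblk[OF j(1) that] by simp
        have "blk d j w = 0\<^sub>v d"
        proof (rule eq_vecI)
          fix a assume "a < dim_vec (0\<^sub>v d)"
          then show "blk d j w $ a = 0\<^sub>v d $ a" using z[of a] by (simp del: blk_index)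
        qed simp
        then show False using bj by simp
      qed
      then obtain h where h: "h \<in> H" "sg h j = i0" by blast
      have hc: "h \<in> carrier G" using h Hc by auto
      define n where "n = g \<otimes> h"
      have nc: "n \<in> carrier G" unfolding n_def using gc hc by simp
      have "sg n i0 = i0" unfolding n_def using sg_mult[OF gc hc i0(1)] h(2) unfolding j_def by simp
      then have nN: "n \<in> N" using sg_self_iff[OF nc i0(1)] by simp
      have nw: "IR n *\<^sub>v w = w" unfolding n_def using IR_mult[OF gc hc wc] winv[OF h(1)] gw by simp
      have "blk d i0 w = \<rho> (xg i0 n i0) *\<^sub>v blk d i0 w"
        using IR_blk[OF nc wc i0(1)] nw \<open>sg n i0 = i0\<close> by simp
      have yN: "xg i0 n i0 \<in> N" using xgT inv_op_closed1[OF T(2) nN] by simp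
      have "c \<cdot>\<^sub>v v' = c \<cdot>\<^sub>v (\<rho> (xg i0 n i0) *\<^sub>v v')"
        using blk0 mult_mat_vec[OF rho_carrier[OF yN] v'c, of c] by (metis \<open>blk d i0 w = \<rho> (xg i0 n i0) *\<^sub>v blk d i0 w\<close>)
      then have "(1/c) \<cdot>\<^sub>v (c \<cdot>\<^sub>v v') = (1/c) \<cdot>\<^sub>v (c \<cdot>\<^sub>v (\<rho> (xg i0 n i0) *\<^sub>v v'))" by simp
      then have "\<rho> (xg i0 n i0) *\<^sub>v v' = v'" using c0 v'c yN by (simp add: smult_smult_assoc)
      then have "\<rho> n *\<^sub>v v = v" using stab[OF nN] by simp
      then have "n \<in> H" using Kv nN by blast
      then have "n \<otimes> inv h \<in> H" using subgroup.m_closed[OF Hs _ subgroup.m_inv_closed[OF Hs h(1)]] by blast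
      moreover have "n \<otimes> inv h = g" unfolding n_def using gc hc by (simp add: m_assoc)
      ultimately show "g \<in> H" by simp
    qed
  qed
  then show ?thesis using wc by blast
qed

end

theorem mainTheorem7:
  fixes G :: "('a, 'b) monoid_scheme" and N :: "'a set"
    and d :: nat and \<rho> :: "'a \<Rightarrow> real mat"
  assumes "oliver_group G"
    and "N \<lhd> G"
    and "ind_RO_mono G N"
    and "is_rep G N d \<rho>"
    and "weak_gap_condition G N d \<rho>"
    and "condition_ii G N d \<rho>"
    and "condition_iii G N d \<rho>"
  shows "weak_gap_condition G (carrier G) (ind_deg G N d) (ind_rep G N d \<rho>)
       \<and> condition_ii G (carrier G) (ind_deg G N d) (ind_rep G N d \<rho>)
       \<and> condition_iii G (carrier G) (ind_deg G N d) (ind_rep G N d \<rho>)"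
proof -
  have fin: "finite (carrier G)" using assms(1) unfolding oliver_group_def by blast
  interpret I: indctx N G d \<rho>
    unfolding indctx_def indctx_axioms_def using assms(2) fin assms(4) by blast
  have fd: "fix_dim (ind_deg G N d) (ind_rep G N d \<rho>) H = vdim (I.m * d) (fix_space (I.m * d) (ind_rep G N d \<rho>) H)" for H
    unfolding fix_dim_vdim I.ind_deg_eq ..
  have wg: "weak_gap_condition G (carrier G) (ind_deg G N d) (ind_rep G N d \<rho>)"
    unfolding weak_gap_condition_def fd using I.weak_gap_G[OF assms(5)] by blast
  have c2: "condition_ii G (carrier G) (ind_deg G N d) (ind_rep G N d \<rho>)"
    unfolding condition_ii_def fd using I.cond_ii_a[OF assms(6)] I.cond_ii_b[OF assms(6)] by blast
  have c3: "condition_iii G (carrier G) (ind_deg G N d) (ind_rep G N d \<rho>)"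
    unfolding condition_iii_def is_isotropy_def I.ind_deg_eq using I.cond_iii_G[OF assms(6) assms(7)] by blast
  show ?thesis using wg c2 c3 by blast
qed

end
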